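(* Consider contexts $X$, actions $A$, random embeddings $R^{(1)},R^{(2)}$ and real outcomes $Y$ whose joint density under a policy $\pi$ is $p_\pi(x,a,r_1,r_2,y)=p(x)\pi(a\mid x)p(r_1\mid x,a)p(r_2\mid r_1)p(y\mid r_2)$, where the factors other than $\pi$ do not depend on $\pi$ (so $R^{(2)}\perp\!\!\!\perp(X,A)\mid R^{(1)}$ and $Y\perp\!\!\!\perp(R^{(1)},X,A)\mid R^{(2)}$). Let $\pi^b,\pi^*$ be behaviour and target policies with $\pi^*(a\mid x)>0\Rightarrow\pi^b(a\mid x)>0$, and let $(x_i,a_i,r^{(1)}_i,r^{(2)}_i,y_i)_{i=1}^n$ be i.i.d. from $p_{\pi^b}$. Define with exact weights $$\hat\theta_{\mathrm{IPW}}=\frac1n\sum_i\frac{\pi^*(a_i\mid x_i)}{\pi^b(a_i\mid x_i)}y_i,\quad\hat\theta^{(j)}_{\mathrm{G\text{-}MIPS}}=\frac1n\sum_i\frac{p_{\pi^*}(r^{(j)}_i)}{p_{\pi^b}(r^{(j)}_i)}y_i\ (j=1,2),\quad\hat\theta_{\mathrm{MR}}=\frac1n\sum_i\frac{p_{\pi^*}(y_i)}{p_{\pi^b}(y_i)}y_i,$$ where $p_\pi(r^{(j)})$ and $p_\pi(y)$ are marginals of $p_\pi$. Then $$\mathbb{E}_{\pi^b}[\hat\theta_{\mathrm{IPW}}]=\mathbb{E}_{\pi^b}[\hat\theta^{(1)}_{\mathrm{G\text{-}MIPS}}]=\mathbb{E}_{\pi^b}[\hat\theta^{(2)}_{\mathrm{G\text{-}MIPS}}]=\mathbb{E}_{\pi^b}[\hat\theta_{\mathrm{MR}}]=\mathbb{E}_{\pi^*}[Y],$$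 and $\mathbb{V}_{\pi^b}[\hat\theta_{\mathrm{IPW}}]\ge\mathbb{V}_{\pi^b}[\hat\theta^{(1)}_{\mathrm{G\text{-}MIPS}}]\ge\mathbb{V}_{\pi^b}[\hat\theta^{(2)}_{\mathrm{G\text{-}MIPS}}]\ge\mathbb{V}_{\pi^b}[\hat\theta_{\mathrm{MR}}]$.
   Context: $\mathbb{E}_\pi,\mathbb{V}_\pi$ denote expectation/variance under $p_\pi$ (and the i.i.d. sample). *)

theory Defs
  imports "HOL-Probability.Probability"
begin

text \<open>Sample points are tuples (x, a, r1, r2, y). Densities are taken w.r.t. base
measures MX, MA, MR1 (for R1), MR2 (for R2) and Lebesgue measure on the real outcome.\<close>

definition jdens ::
  "('x \<Rightarrow> real) \<Rightarrow> ('x \<Rightarrow> 'a \<Rightarrow> real) \<Rightarrow> ('x \<Rightarrow> 'a \<Rightarrow> 'r \<Rightarrow> real)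
   \<Rightarrow> ('r \<Rightarrow> 's \<Rightarrow> real) \<Rightarrow> ('s \<Rightarrow> real \<Rightarrow> real) \<Rightarrow> 'x \<times> 'a \<times> 'r \<times> 's \<times> real \<Rightarrow> real" where
  "jdens px pol q1 q2 qy = (\<lambda>(x, a, r, s, y). px x * pol x a * q1 x a r * q2 r s * qy s y)"

definition jmeas ::
  "'x measure \<Rightarrow> 'a measure \<Rightarrow> 'r measure \<Rightarrow> 's measure \<Rightarrow>
   ('x \<Rightarrow> real) \<Rightarrow> ('x \<Rightarrow> 'a \<Rightarrow> real) \<Rightarrow> ('x \<Rightarrow> 'a \<Rightarrow> 'r \<Rightarrow> real)
   \<Rightarrow> ('r \<Rightarrow> 's \<Rightarrow> real) \<Rightarrow> ('s \<Rightarrow> real \<Rightarrow> real) \<Rightarrow> ('x \<times> 'a \<times> 'r \<times> 's \<times> real) measure" where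
  "jmeas MX MA MR1 MR2 px pol q1 q2 qy =
     density (MX \<Otimes>\<^sub>M MA \<Otimes>\<^sub>M MR1 \<Otimes>\<^sub>M MR2 \<Otimes>\<^sub>M lborel)
       (\<lambda>\<omega>. ennreal (jdens px pol q1 q2 qy \<omega>))"

definition marg_r1 where
  "marg_r1 MX MA MR2 px pol q1 q2 qy r =
     (\<integral>(x, a, s, y). jdens px pol q1 q2 qy (x, a, r, s, y) \<partial>(MX \<Otimes>\<^sub>M MA \<Otimes>\<^sub>M MR2 \<Otimes>\<^sub>M lborel))"

definition marg_r2 where
  "marg_r2 MX MA MR1 px pol q1 q2 qy s =
     (\<integral>(x, a, r, y). jdens px pol q1 q2 qy (x, a, r, s, y) \<partial>(MX \<Otimes>\<^sub>M MA \<Otimes>\<^sub>M MR1 \<Otimes>\<^sub>M lborel))"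

definition marg_y where
  "marg_y MX MA MR1 MR2 px pol q1 q2 qy y =
     (\<integral>(x, a, r, s). jdens px pol q1 q2 qy (x, a, r, s, y) \<partial>(MX \<Otimes>\<^sub>M MA \<Otimes>\<^sub>M MR1 \<Otimes>\<^sub>M MR2))"

definition yof :: "'x \<times> 'a \<times> 'r \<times> 's \<times> real \<Rightarrow> real" where
  "yof = (\<lambda>(x, a, r, s, y). y)"

definition west :: "nat \<Rightarrow> ('x \<times> 'a \<times> 'r \<times> 's \<times> real \<Rightarrow> real)
                   \<Rightarrow> (nat \<Rightarrow> 'x \<times> 'a \<times> 'r \<times> 's \<times> real) \<Rightarrow> real" where
  "west n w \<omega> = (\<Sum>i<n. w (\<omega> i) * yof (\<omega> i)) / real n"

definition var :: "'b measure \<Rightarrow> ('b \<Rightarrow> real) \<Rightarrow> real" where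
  "var M f = (\<integral>\<omega>. (f \<omega> - (\<integral>\<omega>'. f \<omega>' \<partial>M))\<^sup>2 \<partial>M)"

end

theory Submission
  imports Defs
begin

lemma sample_part:
  fixes P :: "'b measure" and g :: "'b \<Rightarrow> real" and n :: nat
  assumes P: "prob_space P" and gm[measurable]: "g \<in> borel_measurable P"
    and g2: "integrable P (\<lambda>x. (g x)\<^sup>2)" and n: "n \<ge> 1"
  defines "S \<equiv> PiM {..<n} (\<lambda>_. P)"
  shows "(\<integral>\<omega>. (\<Sum>i<n. g (\<omega> i)) / real n \<partial>S) = (\<integral>x. g x \<partial>P)"
    and "var S (\<lambda>\<omega>. (\<Sum>i<n. g (\<omega> i)) / real n) = var P g / real n"
proof -
  interpret P: prob_space P by fact
  interpret PS: product_prob_space "\<lambda>_. P" "{..<n}"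
    by (simp add: product_prob_space_def product_prob_space_axioms_def product_sigma_finite_def
        P prob_space_imp_sigma_finite)
  interpret S: prob_space S unfolding S_def by (rule PS.P.prob_space_axioms)
  have gi: "integrable P g" by (rule P.square_integrable_imp_integrable[OF gm g2])
  define m where "m = (\<integral>x. g x \<partial>P)"
  define h where "h = (\<lambda>x. g x - m)"
  have hm[measurable]: "h \<in> borel_measurable P" unfolding h_def by measurable
  have hi: "integrable P h" unfolding h_def using gi by simp
  have h0: "(\<integral>x. h x \<partial>P) = 0" unfolding h_def m_def using gi by (simp add: P.prob_space)
  have h2: "integrable P (\<lambda>x. (h x)\<^sup>2)" unfolding h_def power2_diff using gi g2
    by (intro Bochner_Integration.integrable_diff Bochner_Integration.integrable_add) auto
  have varP: "var P g = (\<integral>x. (h x)\<^sup>2 \<partial>P)" unfolding var_def h_def m_def ..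
  have comp: "i < n \<Longrightarrow> distr S P (\<lambda>\<omega>. \<omega> i) = P" for i
    unfolding S_def by (rule distr_PiM_component) (auto simp: P)
  have compm[measurable]: "i < n \<Longrightarrow> (\<lambda>\<omega>. \<omega> i) \<in> measurable S P" for i
    unfolding S_def by simp
  have intc: "i < n \<Longrightarrow> integrable P f \<Longrightarrow> integrable S (\<lambda>\<omega>. f (\<omega> i))" for i and f :: "'b \<Rightarrow> real"
    using integrable_distr_eq[of "\<lambda>\<omega>. \<omega> i" S P f] comp[of i] borel_measurable_integrable by force
  have intc_eq: "i < n \<Longrightarrow> f \<in> borel_measurable P \<Longrightarrow> (\<integral>\<omega>. f (\<omega> i) \<partial>S) = (\<integral>x. f x \<partial>P)" for i and f :: "'b \<Rightarrow> real"
    using integral_distr[of "\<lambda>\<omega>. \<omega> i" S P f] comp[of i] by simp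
  show mean: "(\<integral>\<omega>. (\<Sum>i<n. g (\<omega> i)) / real n \<partial>S) = (\<integral>x. g x \<partial>P)"
  proof -
    have "(\<integral>\<omega>. (\<Sum>i<n. g (\<omega> i)) / real n \<partial>S) = (\<Sum>i<n. \<integral>\<omega>. g (\<omega> i) \<partial>S) / real n"
      using intc[OF _ gi] by (simp add: Bochner_Integration.integral_sum)
    also have "\<dots> = (\<Sum>i<n. \<integral>x. g x \<partial>P) / real n" using intc_eq[OF _ gm] by simp
    finally show ?thesis using n by simp
  qed
  have cross: "i < n \<Longrightarrow> j < n \<Longrightarrow> i \<noteq> j \<Longrightarrow> integrable S (\<lambda>\<omega>. h (\<omega> i) * h (\<omega> j)) \<and> (\<integral>\<omega>. h (\<omega> i) * h (\<omega> j) \<partial>S) = 0" for i j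
  proof -
    assume ij: "i < n" "j < n" "i \<noteq> j"
    define f where "f = (\<lambda>k. if k = i \<or> k = j then h else (\<lambda>_. 1::real))"
    have fi: "k \<in> {..<n} \<Longrightarrow> integrable P (f k)" for k using hi by (auto simp: f_def)
    have pe: "(\<Prod>k\<in>{..<n}. f k (\<omega> k)) = h (\<omega> i) * h (\<omega> j)" for \<omega>
    proof -
      have "(\<Prod>k\<in>{..<n}. f k (\<omega> k)) = (\<Prod>k\<in>{i,j}. f k (\<omega> k))"
        using ij by (intro prod.mono_neutral_right) (auto simp: f_def)
      also have "\<dots> = h (\<omega> i) * h (\<omega> j)" using ij by (simp add: f_def)
      finally show ?thesis .
    qed
    have "integrable S (\<lambda>\<omega>. \<Prod>k\<in>{..<n}. f k (\<omega> k))"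
      unfolding S_def by (rule PS.product_integrable_prod) (use fi in auto)
    moreover have "(\<integral>\<omega>. (\<Prod>k\<in>{..<n}. f k (\<omega> k)) \<partial>S) = (\<Prod>k\<in>{..<n}. integral\<^sup>L P (f k))"
      unfolding S_def by (rule PS.product_integral_prod) (use fi in auto)
    moreover have "(\<Prod>k\<in>{..<n}. integral\<^sup>L P (f k)) = 0"
      using ij h0 by (auto simp: f_def intro!: bexI[of _ i])
    ultimately show ?thesis unfolding pe by simp
  qed
  have diag: "i < n \<Longrightarrow> integrable S (\<lambda>\<omega>. h (\<omega> i) * h (\<omega> i)) \<and> (\<integral>\<omega>. h (\<omega> i) * h (\<omega> i) \<partial>S) = (\<integral>x. (h x)\<^sup>2 \<partial>P)" for i
    using intc[OF _ h2, of i] intc_eq[of i "\<lambda>x. (h x)\<^sup>2"] by (simp add: power2_eq_square)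
  have pair: "i < n \<Longrightarrow> j < n \<Longrightarrow> integrable S (\<lambda>\<omega>. h (\<omega> i) * h (\<omega> j)) \<and> (\<integral>\<omega>. h (\<omega> i) * h (\<omega> j) \<partial>S) = (if i = j then (\<integral>x. (h x)\<^sup>2 \<partial>P) else 0)" for i j
    using cross diag by (cases "i = j") auto
  have eq: "((\<Sum>i<n. g (\<omega> i)) / real n - (\<integral>\<omega>. (\<Sum>i<n. g (\<omega> i)) / real n \<partial>S))\<^sup>2
      = (\<Sum>i<n. \<Sum>j<n. h (\<omega> i) * h (\<omega> j)) / (real n)\<^sup>2" for \<omega>
  proof -
    have "(\<Sum>i<n. g (\<omega> i)) / real n - (\<integral>\<omega>. (\<Sum>i<n. g (\<omega> i)) / real n \<partial>S) = (\<Sum>i<n. h (\<omega> i)) / real n"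
      using n unfolding mean h_def m_def[symmetric] by (simp add: sum_subtractf field_simps)
    then show ?thesis by (simp add: power2_eq_square sum_product power_divide)
  qed
  have "var S (\<lambda>\<omega>. (\<Sum>i<n. g (\<omega> i)) / real n) = (\<integral>\<omega>. (\<Sum>i<n. \<Sum>j<n. h (\<omega> i) * h (\<omega> j)) / (real n)\<^sup>2 \<partial>S)"
    unfolding var_def eq ..
  also have "\<dots> = (\<Sum>i<n. \<Sum>j<n. \<integral>\<omega>. h (\<omega> i) * h (\<omega> j) \<partial>S) / (real n)\<^sup>2"
  proof -
    have "(\<integral>\<omega>. (\<Sum>i<n. \<Sum>j<n. h (\<omega> i) * h (\<omega> j)) \<partial>S) = (\<Sum>i<n. \<integral>\<omega>. (\<Sum>j<n. h (\<omega> i) * h (\<omega> j)) \<partial>S)"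
      using pair by (subst Bochner_Integration.integral_sum) (auto intro!: Bochner_Integration.integrable_sum)
    also have "\<dots> = (\<Sum>i<n. \<Sum>j<n. \<integral>\<omega>. h (\<omega> i) * h (\<omega> j) \<partial>S)"
      using pair by (intro sum.cong refl, subst Bochner_Integration.integral_sum) auto
    finally show ?thesis by simp
  qed
  also have "\<dots> = (\<Sum>i<n. (\<integral>x. (h x)\<^sup>2 \<partial>P)) / (real n)\<^sup>2"
  proof -
    have "(\<Sum>j<n. \<integral>\<omega>. h (\<omega> i) * h (\<omega> j) \<partial>S) = (\<integral>x. (h x)\<^sup>2 \<partial>P)" if "i < n" for i
    proof -
      have "(\<Sum>j<n. \<integral>\<omega>. h (\<omega> i) * h (\<omega> j) \<partial>S) = (\<Sum>j<n. if i = j then (\<integral>x. (h x)\<^sup>2 \<partial>P) else 0)"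
        using pair that by (intro sum.cong) auto
      also have "\<dots> = (\<integral>x. (h x)\<^sup>2 \<partial>P)" using that by (simp add: sum.delta)
      finally show ?thesis .
    qed
    then show ?thesis by (intro arg_cong[where f="\<lambda>t. t / _"] sum.cong) auto
  qed
  also have "\<dots> = var P g / real n" using n by (simp add: varP power2_eq_square)
  finally show "var S (\<lambda>\<omega>. (\<Sum>i<n. g (\<omega> i)) / real n) = var P g / real n" .
qed

lemma cs_nn:
  fixes g w :: "'m \<Rightarrow> real"
  assumes gm[measurable]: "g \<in> borel_measurable M" and wm[measurable]: "w \<in> borel_measurable M"
    and g0: "\<And>m. g m \<ge> 0" and w0: "\<And>m. w m \<ge> 0"
    and G: "(\<integral>\<^sup>+ m. ennreal (g m) \<partial>M) = ennreal G" and F: "(\<integral>\<^sup>+ m. ennreal (g m * w m) \<partial>M) = ennreal F"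
    and G0: "G \<ge> 0" and F0: "F \<ge> 0"
  shows "ennreal (G * (F / G)\<^sup>2) \<le> (\<integral>\<^sup>+ m. ennreal (g m * (w m)\<^sup>2) \<partial>M)"
proof (cases "G = 0")
  case True then show ?thesis by simp
next
  case False
  with G0 have Gp: "G > 0" by simp
  define c where "c = F / G"
  have c0: "c \<ge> 0" using F0 G0 by (simp add: c_def)
  have pt: "ennreal (2 * c) * ennreal (g m * w m) \<le> ennreal (g m * (w m)\<^sup>2) + ennreal (c\<^sup>2) * ennreal (g m)" for m
  proof -
    have "2 * c * (g m * w m) \<le> g m * (w m)\<^sup>2 + c\<^sup>2 * g m"
    proof -
      have "0 \<le> g m * (w m - c)\<^sup>2" using g0 by simp
      then show ?thesis by (simp add: power2_eq_square algebra_simps)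
    qed
    then show ?thesis using g0 w0 c0
      by (simp add: ennreal_mult'[symmetric] ennreal_plus[symmetric] ennreal_leI del: ennreal_plus)
  qed
  have "ennreal (2 * c) * ennreal F = (\<integral>\<^sup>+ m. ennreal (2 * c) * ennreal (g m * w m) \<partial>M)"
    by (simp add: nn_integral_cmult F)
  also have "\<dots> \<le> (\<integral>\<^sup>+ m. ennreal (g m * (w m)\<^sup>2) + ennreal (c\<^sup>2) * ennreal (g m) \<partial>M)"
    by (intro nn_integral_mono pt)
  also have "\<dots> = (\<integral>\<^sup>+ m. ennreal (g m * (w m)\<^sup>2) \<partial>M) + ennreal (c\<^sup>2) * ennreal G"
    by (simp add: nn_integral_add nn_integral_cmult G)
  finally have ineq: "ennreal (2 * c) * ennreal F \<le> (\<integral>\<^sup>+ m. ennreal (g m * (w m)\<^sup>2) \<partial>M) + ennreal (c\<^sup>2) * ennreal G" .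
  show ?thesis
  proof (cases "(\<integral>\<^sup>+ m. ennreal (g m * (w m)\<^sup>2) \<partial>M) = \<infinity>")
    case True then show ?thesis by simp
  next
    case False
    obtain q where q: "(\<integral>\<^sup>+ m. ennreal (g m * (w m)\<^sup>2) \<partial>M) = ennreal q" "q \<ge> 0"
      using False by (cases "(\<integral>\<^sup>+ m. ennreal (g m * (w m)\<^sup>2) \<partial>M)" rule: ennreal_cases) auto
    have "ennreal (2 * c * F) \<le> ennreal (q + c\<^sup>2 * G)"
      using ineq q c0 F0 G0 by (simp add: ennreal_mult'[symmetric] ennreal_plus[symmetric] del: ennreal_plus)
    then have "2 * c * F \<le> q + c\<^sup>2 * G"
      using q c0 G0 by (simp add: ennreal_plus[symmetric] del: ennreal_plus)
    moreover have "c\<^sup>2 * G = c * F" using Gp unfolding c_def by (simp add: power2_eq_square)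
    moreover have "G * (F / G)\<^sup>2 = c * F" using Gp unfolding c_def by (simp add: power2_eq_square)
    ultimately have "G * (F / G)\<^sup>2 \<le> q" by linarith
    then show ?thesis using q by (simp add: ennreal_leI)
  qed
qed

locale stepc = pair_sigma_finite M N for M :: "'m measure" and N :: "'n measure" +
  fixes k :: "'m \<Rightarrow> 'n \<Rightarrow> real" and ub us w :: "'m \<Rightarrow> real"
  assumes k_meas: "(\<lambda>(m, n). k m n) \<in> borel_measurable (M \<Otimes>\<^sub>M N)"
    and ub_meas[measurable]: "ub \<in> borel_measurable M"
    and us_meas[measurable]: "us \<in> borel_measurable M"
    and w_meas[measurable]: "w \<in> borel_measurable M"
    and k_nn: "\<And>m n. k m n \<ge> 0" and ub_nn: "\<And>m. ub m \<ge> 0" and us_nn: "\<And>m. us m \<ge> 0"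
    and w_nn: "\<And>m. w m \<ge> 0"
    and k_norm: "\<And>m. m \<in> space M \<Longrightarrow> (\<integral>\<^sup>+ n. ennreal (k m n) \<partial>N) = 1"
    and ub_fin: "(\<integral>\<^sup>+ m. ennreal (ub m) \<partial>M) \<noteq> \<infinity>"
    and us_fin: "(\<integral>\<^sup>+ m. ennreal (us m) \<partial>M) \<noteq> \<infinity>"
    and uw: "AE m in M. ub m * w m = us m"
begin

lemma k_meas'[measurable (raw)]:
  assumes "f \<in> measurable L M" "g \<in> measurable L N"
  shows "(\<lambda>x. k (f x) (g x)) \<in> borel_measurable L"
  using measurable_compose[OF measurable_Pair[OF assms] k_meas] by simp

definition PP :: "('m \<Rightarrow> real) \<Rightarrow> 'n \<Rightarrow> ennreal" where
  "PP u n = (\<integral>\<^sup>+ m. ennreal (u m * k m n) \<partial>M)"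

definition Vb where "Vb n = enn2real (PP ub n)"
definition Vs where "Vs n = enn2real (PP us n)"
definition w' where "w' n = Vs n / Vb n"

lemma PP_meas[measurable]: assumes [measurable]: "u \<in> borel_measurable M" shows "PP u \<in> borel_measurable N"
  unfolding PP_def by measurable

lemma Vb_meas[measurable]: "Vb \<in> borel_measurable N" unfolding Vb_def by measurable
lemma Vs_meas[measurable]: "Vs \<in> borel_measurable N" unfolding Vs_def by measurable
lemma w'_meas[measurable]: "w' \<in> borel_measurable N" unfolding w'_def by measurable

lemma Vb_nn: "Vb n \<ge> 0" unfolding Vb_def by simp
lemma Vs_nn: "Vs n \<ge> 0" unfolding Vs_def by simp
lemma w'_nn: "w' n \<ge> 0" unfolding w'_def by (simp add: Vb_nn Vs_nn)

lemma tonelli_raw: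
  assumes [measurable]: "u \<in> borel_measurable M" "h \<in> borel_measurable N" and u0: "\<And>m. u m \<ge> 0"
  shows "(\<integral>\<^sup>+ n. PP u n * h n \<partial>N) = (\<integral>\<^sup>+ m. ennreal (u m) * (\<integral>\<^sup>+ n. ennreal (k m n) * h n \<partial>N) \<partial>M)"
proof -
  have "(\<integral>\<^sup>+ n. PP u n * h n \<partial>N) = (\<integral>\<^sup>+ n. \<integral>\<^sup>+ m. ennreal (u m * k m n) * h n \<partial>M \<partial>N)"
  proof -
    have "n \<in> space N \<Longrightarrow> (\<lambda>m. ennreal (u m * k m n)) \<in> borel_measurable M" for n by measurable
    then show ?thesis unfolding PP_def by (intro nn_integral_cong) (simp add: nn_integral_multc)
  qed
  also have "\<dots> = (\<integral>\<^sup>+ m. \<integral>\<^sup>+ n. ennreal (u m * k m n) * h n \<partial>N \<partial>M)"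
    by (rule Fubini') measurable
  also have "\<dots> = (\<integral>\<^sup>+ m. ennreal (u m) * (\<integral>\<^sup>+ n. ennreal (k m n) * h n \<partial>N) \<partial>M)"
  proof (intro nn_integral_cong)
    fix m assume m: "m \<in> space M"
    have [measurable]: "(\<lambda>n. ennreal (k m n) * h n) \<in> borel_measurable N" using m by measurable
    show "(\<integral>\<^sup>+ n. ennreal (u m * k m n) * h n \<partial>N) = ennreal (u m) * (\<integral>\<^sup>+ n. ennreal (k m n) * h n \<partial>N)"
      using u0 k_nn by (simp add: nn_integral_cmult[symmetric] ennreal_mult mult.assoc)
  qed
  finally show ?thesis .
qed

lemma PP_int:
  assumes [measurable]: "u \<in> borel_measurable M" and u0: "\<And>m. u m \<ge> 0"
  shows "(\<integral>\<^sup>+ n. PP u n \<partial>N) = (\<integral>\<^sup>+ m. ennreal (u m) \<partial>M)"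
proof -
  have "(\<integral>\<^sup>+ n. PP u n \<partial>N) = (\<integral>\<^sup>+ n. PP u n * 1 \<partial>N)" by simp
  also have "\<dots> = (\<integral>\<^sup>+ m. ennreal (u m) * (\<integral>\<^sup>+ n. ennreal (k m n) * 1 \<partial>N) \<partial>M)"
    by (rule tonelli_raw) (auto simp: u0)
  also have "\<dots> = (\<integral>\<^sup>+ m. ennreal (u m) \<partial>M)"
    by (intro nn_integral_cong) (simp add: k_norm)
  finally show ?thesis .
qed

lemma PP_AE:
  assumes [measurable]: "u \<in> borel_measurable M" and u0: "\<And>m. u m \<ge> 0"
    and fin: "(\<integral>\<^sup>+ m. ennreal (u m) \<partial>M) \<noteq> \<infinity>"
  shows "AE n in N. ennreal (enn2real (PP u n)) = PP u n"
proof -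
  have "AE n in N. PP u n \<noteq> \<infinity>"
    by (rule nn_integral_PInf_AE) (use PP_int[OF assms(1) u0] fin in auto)
  then show ?thesis by eventually_elim (simp add: less_top)
qed

lemma tonelli:
  assumes [measurable]: "u \<in> borel_measurable M" "h \<in> borel_measurable N" and u0: "\<And>m. u m \<ge> 0"
    and fin: "(\<integral>\<^sup>+ m. ennreal (u m) \<partial>M) \<noteq> \<infinity>"
  shows "(\<integral>\<^sup>+ n. ennreal (enn2real (PP u n)) * h n \<partial>N) = (\<integral>\<^sup>+ m. ennreal (u m) * (\<integral>\<^sup>+ n. ennreal (k m n) * h n \<partial>N) \<partial>M)"
    (is "_ = ?R")
proof -
  have "(\<integral>\<^sup>+ n. ennreal (enn2real (PP u n)) * h n \<partial>N) = (\<integral>\<^sup>+ n. PP u n * h n \<partial>N)"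
    using PP_AE[OF assms(1) u0 fin] by (intro nn_integral_cong_AE) (auto elim: eventually_mono)
  also have "\<dots> = ?R" by (rule tonelli_raw) (auto simp: u0)
  finally show ?thesis .
qed

lemma tonelli_b:
  assumes [measurable]: "h \<in> borel_measurable N"
  shows "(\<integral>\<^sup>+ n. ennreal (Vb n) * h n \<partial>N) = (\<integral>\<^sup>+ m. ennreal (ub m) * (\<integral>\<^sup>+ n. ennreal (k m n) * h n \<partial>N) \<partial>M)"
  unfolding Vb_def by (rule tonelli[OF ub_meas assms ub_nn ub_fin])

lemma tonelli_s:
  assumes [measurable]: "h \<in> borel_measurable N"
  shows "(\<integral>\<^sup>+ n. ennreal (Vs n) * h n \<partial>N) = (\<integral>\<^sup>+ m. ennreal (us m) * (\<integral>\<^sup>+ n. ennreal (k m n) * h n \<partial>N) \<partial>M)"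
  unfolding Vs_def by (rule tonelli[OF us_meas assms us_nn us_fin])

lemma Vb_int: "(\<integral>\<^sup>+ n. ennreal (Vb n) \<partial>N) = (\<integral>\<^sup>+ m. ennreal (ub m) \<partial>M)"
  using tonelli_b[of "\<lambda>_. 1"] by (simp add: k_norm cong: nn_integral_cong)

lemma Vs_int: "(\<integral>\<^sup>+ n. ennreal (Vs n) \<partial>N) = (\<integral>\<^sup>+ m. ennreal (us m) \<partial>M)"
  using tonelli_s[of "\<lambda>_. 1"] by (simp add: k_norm cong: nn_integral_cong)

lemma PPs_eq: "PP us n = (\<integral>\<^sup>+ m. ennreal (ub m * k m n * w m) \<partial>M)"
  unfolding PP_def using uw
proof (intro nn_integral_cong_AE, elim eventually_mono)
  fix x assume h: "ub x * w x = us x"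
  have e: "ub x * k x n * w x = us x * k x n" unfolding h[symmetric] by (simp add: ac_simps)
  show "ennreal (us x * k x n) = ennreal (ub x * k x n * w x)" by (rule arg_cong[where f=ennreal, OF e[symmetric]])
qed

lemma AE_Vb_w': "AE n in N. Vb n * w' n = Vs n"
proof -
  have "AE n in N. ennreal (enn2real (PP ub n)) = PP ub n"
    by (rule PP_AE[OF ub_meas ub_nn ub_fin])
  moreover have "AE n in N. n \<in> space N" by simp
  ultimately show ?thesis
  proof eventually_elim
    case (elim n)
    have [measurable]: "(\<lambda>m. k m n) \<in> borel_measurable M" using elim by measurable
    show ?case
    proof (cases "Vb n = 0")
      case False then show ?thesis by (simp add: w'_def)
    next
      case True
      then have "PP ub n = 0" using elim by (simp add: Vb_def)
      then have "AE m in M. ennreal (ub m * k m n) = 0"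
        unfolding PP_def by (subst (asm) nn_integral_0_iff_AE) auto
      then have "PP us n = 0" unfolding PPs_eq
        by (subst nn_integral_0_iff_AE) (auto elim!: eventually_mono intro: mult_nonpos_nonneg w_nn simp: ennreal_eq_0_iff)
      then show ?thesis using True by (simp add: Vs_def)
    qed
  qed
qed

lemma mean_step:
  assumes [measurable]: "h \<in> borel_measurable N"
  shows "(\<integral>\<^sup>+ n. ennreal (Vb n) * ennreal (w' n) * h n \<partial>N) = (\<integral>\<^sup>+ n. ennreal (Vs n) * h n \<partial>N)"
  using AE_Vb_w' by (intro nn_integral_cong_AE) (auto elim!: eventually_mono simp: ennreal_mult'[symmetric] Vb_nn)

lemma AE_cs: "AE n in N. ennreal (Vb n * (w' n)\<^sup>2) \<le> (\<integral>\<^sup>+ m. ennreal (ub m * (w m)\<^sup>2 * k m n) \<partial>M)"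
proof -
  have "AE n in N. ennreal (enn2real (PP ub n)) = PP ub n"
    by (rule PP_AE[OF ub_meas ub_nn ub_fin])
  moreover have "AE n in N. ennreal (enn2real (PP us n)) = PP us n"
    by (rule PP_AE[OF us_meas us_nn us_fin])
  moreover have "AE n in N. n \<in> space N" by simp
  ultimately show ?thesis
  proof eventually_elim
    case (elim n)
    have [measurable]: "(\<lambda>m. k m n) \<in> borel_measurable M" using elim by measurable
    have "ennreal (Vb n * (Vs n / Vb n)\<^sup>2) \<le> (\<integral>\<^sup>+ m. ennreal (ub m * k m n * (w m)\<^sup>2) \<partial>M)"
    proof (rule cs_nn)
      show "(\<integral>\<^sup>+ m. ennreal (ub m * k m n) \<partial>M) = ennreal (Vb n)"
        using elim by (simp add: Vb_def PP_def)
      show "(\<integral>\<^sup>+ m. ennreal (ub m * k m n * w m) \<partial>M) = ennreal (Vs n)"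
        using elim by (simp add: Vs_def PPs_eq)
    qed (auto simp: ub_nn k_nn w_nn Vb_nn Vs_nn)
    then show ?case by (simp add: w'_def algebra_simps)
  qed
qed

lemma second_step:
  assumes [measurable]: "h \<in> borel_measurable N"
  shows "(\<integral>\<^sup>+ n. ennreal (Vb n) * ennreal ((w' n)\<^sup>2) * h n \<partial>N)
    \<le> (\<integral>\<^sup>+ m. ennreal (ub m) * ennreal ((w m)\<^sup>2) * (\<integral>\<^sup>+ n. ennreal (k m n) * h n \<partial>N) \<partial>M)"
proof -
  have "(\<integral>\<^sup>+ n. ennreal (Vb n) * ennreal ((w' n)\<^sup>2) * h n \<partial>N) \<le> (\<integral>\<^sup>+ n. PP (\<lambda>m. ub m * (w m)\<^sup>2) n * h n \<partial>N)"
    using AE_cs by (intro nn_integral_mono_AE) (auto elim!: eventually_mono intro!: mult_right_mono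
        simp: ennreal_mult'[symmetric] Vb_nn PP_def mult.assoc)
  also have "\<dots> = (\<integral>\<^sup>+ m. ennreal (ub m * (w m)\<^sup>2) * (\<integral>\<^sup>+ n. ennreal (k m n) * h n \<partial>N) \<partial>M)"
    by (rule tonelli_raw) (auto simp: ub_nn)
  also have "\<dots> = (\<integral>\<^sup>+ m. ennreal (ub m) * ennreal ((w m)\<^sup>2) * (\<integral>\<^sup>+ n. ennreal (k m n) * h n \<partial>N) \<partial>M)"
    by (simp add: ennreal_mult ub_nn)
  finally show ?thesis .
qed

end

lemma iter2:
  assumes "sigma_finite_measure B" "f \<in> borel_measurable (A \<Otimes>\<^sub>M B)"
  shows "(\<integral>\<^sup>+ p. f p \<partial>(A \<Otimes>\<^sub>M B)) = (\<integral>\<^sup>+ a. \<integral>\<^sup>+ b. f (a, b) \<partial>B \<partial>A)"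
  using sigma_finite_measure.nn_integral_fst[OF assms] by simp

lemma iter3:
  assumes B: "sigma_finite_measure B" and C: "sigma_finite_measure C"
    and f: "f \<in> borel_measurable (A \<Otimes>\<^sub>M B \<Otimes>\<^sub>M C)"
  shows "(\<integral>\<^sup>+ p. f p \<partial>(A \<Otimes>\<^sub>M B \<Otimes>\<^sub>M C)) = (\<integral>\<^sup>+ a. \<integral>\<^sup>+ b. \<integral>\<^sup>+ c. f (a, b, c) \<partial>C \<partial>B \<partial>A)"
proof -
  have "(\<integral>\<^sup>+ p. f p \<partial>(A \<Otimes>\<^sub>M B \<Otimes>\<^sub>M C)) = (\<integral>\<^sup>+ a. \<integral>\<^sup>+ q. f (a, q) \<partial>(B \<Otimes>\<^sub>M C) \<partial>A)"
    by (rule iter2[OF sigma_finite_pair_measure[OF B C] f])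
  also have "\<dots> = (\<integral>\<^sup>+ a. \<integral>\<^sup>+ b. \<integral>\<^sup>+ c. f (a, b, c) \<partial>C \<partial>B \<partial>A)"
    by (intro nn_integral_cong iter2[OF C] measurable_compose[OF measurable_Pair1' f]) auto
  finally show ?thesis .
qed

lemma iter4:
  assumes B: "sigma_finite_measure B" and C: "sigma_finite_measure C" and D: "sigma_finite_measure D"
    and f: "f \<in> borel_measurable (A \<Otimes>\<^sub>M B \<Otimes>\<^sub>M C \<Otimes>\<^sub>M D)"
  shows "(\<integral>\<^sup>+ p. f p \<partial>(A \<Otimes>\<^sub>M B \<Otimes>\<^sub>M C \<Otimes>\<^sub>M D)) = (\<integral>\<^sup>+ a. \<integral>\<^sup>+ b. \<integral>\<^sup>+ c. \<integral>\<^sup>+ d. f (a, b, c, d) \<partial>D \<partial>C \<partial>B \<partial>A)"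
proof -
  have "(\<integral>\<^sup>+ p. f p \<partial>(A \<Otimes>\<^sub>M B \<Otimes>\<^sub>M C \<Otimes>\<^sub>M D)) = (\<integral>\<^sup>+ a. \<integral>\<^sup>+ q. f (a, q) \<partial>(B \<Otimes>\<^sub>M C \<Otimes>\<^sub>M D) \<partial>A)"
    by (rule iter2[OF sigma_finite_pair_measure[OF B sigma_finite_pair_measure[OF C D]] f])
  also have "\<dots> = (\<integral>\<^sup>+ a. \<integral>\<^sup>+ b. \<integral>\<^sup>+ c. \<integral>\<^sup>+ d. f (a, b, c, d) \<partial>D \<partial>C \<partial>B \<partial>A)"
    by (intro nn_integral_cong iter3[OF C D] measurable_compose[OF measurable_Pair1' f]) auto
  finally show ?thesis .
qed

lemma iter5:
  assumes B: "sigma_finite_measure B" and C: "sigma_finite_measure C" and D: "sigma_finite_measure D"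
    and E: "sigma_finite_measure E"
    and f: "f \<in> borel_measurable (A \<Otimes>\<^sub>M B \<Otimes>\<^sub>M C \<Otimes>\<^sub>M D \<Otimes>\<^sub>M E)"
  shows "(\<integral>\<^sup>+ p. f p \<partial>(A \<Otimes>\<^sub>M B \<Otimes>\<^sub>M C \<Otimes>\<^sub>M D \<Otimes>\<^sub>M E)) =
    (\<integral>\<^sup>+ a. \<integral>\<^sup>+ b. \<integral>\<^sup>+ c. \<integral>\<^sup>+ d. \<integral>\<^sup>+ e. f (a, b, c, d, e) \<partial>E \<partial>D \<partial>C \<partial>B \<partial>A)"
proof -
  have "(\<integral>\<^sup>+ p. f p \<partial>(A \<Otimes>\<^sub>M B \<Otimes>\<^sub>M C \<Otimes>\<^sub>M D \<Otimes>\<^sub>M E)) = (\<integral>\<^sup>+ a. \<integral>\<^sup>+ q. f (a, q) \<partial>(B \<Otimes>\<^sub>M C \<Otimes>\<^sub>M D \<Otimes>\<^sub>M E) \<partial>A)"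
    by (rule iter2[OF sigma_finite_pair_measure[OF B sigma_finite_pair_measure[OF C sigma_finite_pair_measure[OF D E]]] f])
  also have "\<dots> = (\<integral>\<^sup>+ a. \<integral>\<^sup>+ b. \<integral>\<^sup>+ c. \<integral>\<^sup>+ d. \<integral>\<^sup>+ e. f (a, b, c, d, e) \<partial>E \<partial>D \<partial>C \<partial>B \<partial>A)"
    by (intro nn_integral_cong iter4[OF C D E] measurable_compose[OF measurable_Pair1' f]) auto
  finally show ?thesis .
qed

locale setting =
  fixes MX :: "'x measure" and MA :: "'a measure" and MR1 :: "'r measure" and MR2 :: "'s measure"
    and px :: "'x \<Rightarrow> real" and pib pis :: "'x \<Rightarrow> 'a \<Rightarrow> real"
    and q1 :: "'x \<Rightarrow> 'a \<Rightarrow> 'r \<Rightarrow> real" and q2 :: "'r \<Rightarrow> 's \<Rightarrow> real"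
    and qy :: "'s \<Rightarrow> real \<Rightarrow> real"
  assumes sfX: "sigma_finite_measure MX" and sfA: "sigma_finite_measure MA"
    and sfR: "sigma_finite_measure MR1" and sfS: "sigma_finite_measure MR2"
    and px_meas: "px \<in> borel_measurable MX"
    and pib_meas: "(\<lambda>(x, a). pib x a) \<in> borel_measurable (MX \<Otimes>\<^sub>M MA)"
    and pis_meas: "(\<lambda>(x, a). pis x a) \<in> borel_measurable (MX \<Otimes>\<^sub>M MA)"
    and q1_meas: "(\<lambda>(x, a, r). q1 x a r) \<in> borel_measurable (MX \<Otimes>\<^sub>M MA \<Otimes>\<^sub>M MR1)"
    and q2_meas: "(\<lambda>(r, s). q2 r s) \<in> borel_measurable (MR1 \<Otimes>\<^sub>M MR2)"
    and qy_meas: "(\<lambda>(s, y). qy s y) \<in> borel_measurable (MR2 \<Otimes>\<^sub>M lborel)"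
    and px_nn: "\<And>x. px x \<ge> 0"
    and pib_nn: "\<And>x a. pib x a \<ge> 0" and pis_nn: "\<And>x a. pis x a \<ge> 0"
    and q1_nn: "\<And>x a r. q1 x a r \<ge> 0" and q2_nn: "\<And>r s. q2 r s \<ge> 0"
    and qy_nn: "\<And>s y. qy s y \<ge> 0"
    and px_norm: "(\<integral>\<^sup>+ x. ennreal (px x) \<partial>MX) = 1"
    and pib_norm: "\<And>x. x \<in> space MX \<Longrightarrow> (\<integral>\<^sup>+ a. ennreal (pib x a) \<partial>MA) = 1"
    and pis_norm: "\<And>x. x \<in> space MX \<Longrightarrow> (\<integral>\<^sup>+ a. ennreal (pis x a) \<partial>MA) = 1"
    and q1_norm: "\<And>x a. x \<in> space MX \<Longrightarrow> a \<in> space MA \<Longrightarrow> (\<integral>\<^sup>+ r. ennreal (q1 x a r) \<partial>MR1) = 1"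
    and q2_norm: "\<And>r. r \<in> space MR1 \<Longrightarrow> (\<integral>\<^sup>+ s. ennreal (q2 r s) \<partial>MR2) = 1"
    and qy_norm: "\<And>s. s \<in> space MR2 \<Longrightarrow> (\<integral>\<^sup>+ y. ennreal (qy s y) \<partial>lborel) = 1"
    and abs_cont: "\<And>x a. pis x a > 0 \<Longrightarrow> pib x a > 0"
begin

lemma px_m[measurable (raw)]: "f \<in> measurable L MX \<Longrightarrow> (\<lambda>x. px (f x)) \<in> borel_measurable L"
  using measurable_compose px_meas by blast

lemma pib_m[measurable (raw)]: "f \<in> measurable L MX \<Longrightarrow> g \<in> measurable L MA \<Longrightarrow> (\<lambda>x. pib (f x) (g x)) \<in> borel_measurable L"
  using measurable_compose[OF measurable_Pair pib_meas] by simp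

lemma pis_m[measurable (raw)]: "f \<in> measurable L MX \<Longrightarrow> g \<in> measurable L MA \<Longrightarrow> (\<lambda>x. pis (f x) (g x)) \<in> borel_measurable L"
  using measurable_compose[OF measurable_Pair pis_meas] by simp

lemma q1_m[measurable (raw)]: "f \<in> measurable L MX \<Longrightarrow> g \<in> measurable L MA \<Longrightarrow> h \<in> measurable L MR1 \<Longrightarrow> (\<lambda>x. q1 (f x) (g x) (h x)) \<in> borel_measurable L"
  using measurable_compose[OF measurable_Pair[OF _ measurable_Pair] q1_meas] by simp

lemma q2_m[measurable (raw)]: "f \<in> measurable L MR1 \<Longrightarrow> g \<in> measurable L MR2 \<Longrightarrow> (\<lambda>x. q2 (f x) (g x)) \<in> borel_measurable L"
  using measurable_compose[OF measurable_Pair q2_meas] by simp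

lemma qy_m[measurable (raw)]: "f \<in> measurable L MR2 \<Longrightarrow> g \<in> borel_measurable L \<Longrightarrow> (\<lambda>x. qy (f x) (g x)) \<in> borel_measurable L"
  using measurable_compose[OF measurable_Pair qy_meas, of f L g] by simp

lemma sfXA: "sigma_finite_measure (MX \<Otimes>\<^sub>M MA)" by (rule sigma_finite_pair_measure[OF sfX sfA])

lemma pol_int:
  assumes [measurable]: "(\<lambda>(x, a). pol x a) \<in> borel_measurable (MX \<Otimes>\<^sub>M MA)"
    and nn: "\<And>x a. pol x a \<ge> 0" and norm: "\<And>x. x \<in> space MX \<Longrightarrow> (\<integral>\<^sup>+ a. ennreal (pol x a) \<partial>MA) = 1"
  shows "(\<integral>\<^sup>+ xa. ennreal (px (fst xa) * pol (fst xa) (snd xa)) \<partial>(MX \<Otimes>\<^sub>M MA)) = 1"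
proof -
  have pm[measurable]: "(\<lambda>xa. pol (fst xa) (snd xa)) \<in> borel_measurable (MX \<Otimes>\<^sub>M MA)"
    using assms(1) by (simp add: split_beta')
  have "(\<integral>\<^sup>+ xa. ennreal (px (fst xa) * pol (fst xa) (snd xa)) \<partial>(MX \<Otimes>\<^sub>M MA)) = (\<integral>\<^sup>+ x. \<integral>\<^sup>+ a. ennreal (px x * pol x a) \<partial>MA \<partial>MX)"
    by (subst iter2[OF sfA]) simp_all
  also have "\<dots> = (\<integral>\<^sup>+ x. ennreal (px x) * (\<integral>\<^sup>+ a. ennreal (pol x a) \<partial>MA) \<partial>MX)"
    using px_nn nn by (intro nn_integral_cong) (simp add: nn_integral_cmult ennreal_mult)
  also have "\<dots> = 1" using norm px_norm by (simp cong: nn_integral_cong)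
  finally show ?thesis .
qed

sublocale L1: stepc "MX \<Otimes>\<^sub>M MA" MR1 "\<lambda>xa r. q1 (fst xa) (snd xa) r"
  "\<lambda>xa. px (fst xa) * pib (fst xa) (snd xa)" "\<lambda>xa. px (fst xa) * pis (fst xa) (snd xa)"
  "\<lambda>xa. pis (fst xa) (snd xa) / pib (fst xa) (snd xa)"
proof (intro stepc.intro pair_sigma_finite.intro stepc_axioms.intro)
  show "sigma_finite_measure (MX \<Otimes>\<^sub>M MA)" by (rule sfXA)
  show "sigma_finite_measure MR1" by (rule sfR)
  show "(\<lambda>(m, n). q1 (fst m) (snd m) n) \<in> borel_measurable ((MX \<Otimes>\<^sub>M MA) \<Otimes>\<^sub>M MR1)" by measurable
  show "(\<integral>\<^sup>+ xa. ennreal (px (fst xa) * pib (fst xa) (snd xa)) \<partial>(MX \<Otimes>\<^sub>M MA)) \<noteq> \<infinity>"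
    using pol_int[OF pib_meas pib_nn pib_norm] by simp
  show "(\<integral>\<^sup>+ xa. ennreal (px (fst xa) * pis (fst xa) (snd xa)) \<partial>(MX \<Otimes>\<^sub>M MA)) \<noteq> \<infinity>"
    using pol_int[OF pis_meas pis_nn pis_norm] by simp
  show "AE m in MX \<Otimes>\<^sub>M MA. px (fst m) * pib (fst m) (snd m) * (pis (fst m) (snd m) / pib (fst m) (snd m)) = px (fst m) * pis (fst m) (snd m)"
  proof (intro AE_I2)
    fix m :: "'x \<times> 'a"
    show "px (fst m) * pib (fst m) (snd m) * (pis (fst m) (snd m) / pib (fst m) (snd m)) = px (fst m) * pis (fst m) (snd m)"
    proof (cases "pib (fst m) (snd m) = 0")
      case True
      then have "pis (fst m) (snd m) = 0" using abs_cont[of "fst m" "snd m"] pis_nn[of "fst m" "snd m"] by linarith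
      then show ?thesis using True by simp
    qed simp
  qed
qed (auto simp: px_nn pib_nn pis_nn q1_nn space_pair_measure q1_norm)

sublocale L2: stepc MR1 MR2 q2 L1.Vb L1.Vs L1.w'
proof (intro stepc.intro pair_sigma_finite.intro stepc_axioms.intro)
  show "sigma_finite_measure MR1" by (rule sfR)
  show "sigma_finite_measure MR2" by (rule sfS)
  show "(\<lambda>(m, n). q2 m n) \<in> borel_measurable (MR1 \<Otimes>\<^sub>M MR2)" by (rule q2_meas)
  show "(\<integral>\<^sup>+ m. ennreal (L1.Vb m) \<partial>MR1) \<noteq> \<infinity>"
    using pol_int[OF pib_meas pib_nn pib_norm] by (simp add: L1.Vb_int)
  show "(\<integral>\<^sup>+ m. ennreal (L1.Vs m) \<partial>MR1) \<noteq> \<infinity>"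
    using pol_int[OF pis_meas pis_nn pis_norm] by (simp add: L1.Vs_int)
qed (auto simp: q2_nn L1.Vb_nn L1.Vs_nn L1.w'_nn q2_norm L1.AE_Vb_w')

sublocale L3: stepc MR2 lborel qy L2.Vb L2.Vs L2.w'
proof (intro stepc.intro pair_sigma_finite.intro stepc_axioms.intro)
  show "sigma_finite_measure MR2" by (rule sfS)
  show "sigma_finite_measure lborel" by (rule lborel.sigma_finite_measure_axioms)
  show "(\<lambda>(m, n). qy m n) \<in> borel_measurable (MR2 \<Otimes>\<^sub>M lborel)" by (rule qy_meas)
  show "(\<integral>\<^sup>+ m. ennreal (L2.Vb m) \<partial>MR2) \<noteq> \<infinity>"
    using pol_int[OF pib_meas pib_nn pib_norm] by (simp add: L2.Vb_int L1.Vb_int)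
  show "(\<integral>\<^sup>+ m. ennreal (L2.Vs m) \<partial>MR2) \<noteq> \<infinity>"
    using pol_int[OF pis_meas pis_nn pis_norm] by (simp add: L2.Vs_int L1.Vs_int)
qed (auto simp: qy_nn L2.Vb_nn L2.Vs_nn L2.w'_nn qy_norm L2.AE_Vb_w')

end

context setting
begin

definition H3 :: "(real \<Rightarrow> ennreal) \<Rightarrow> 's \<Rightarrow> ennreal" where
  "H3 f s = (\<integral>\<^sup>+ y. ennreal (qy s y) * f y \<partial>lborel)"
definition H2 :: "('s \<Rightarrow> ennreal) \<Rightarrow> (real \<Rightarrow> ennreal) \<Rightarrow> 'r \<Rightarrow> ennreal" where
  "H2 e f r = (\<integral>\<^sup>+ s. ennreal (q2 r s) * (e s * H3 f s) \<partial>MR2)"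
definition H1 :: "('r \<Rightarrow> ennreal) \<Rightarrow> ('s \<Rightarrow> ennreal) \<Rightarrow> (real \<Rightarrow> ennreal) \<Rightarrow> 'x \<times> 'a \<Rightarrow> ennreal" where
  "H1 d e f xa = (\<integral>\<^sup>+ r. ennreal (q1 (fst xa) (snd xa) r) * (d r * H2 e f r) \<partial>MR1)"

lemma H3_m[measurable]: assumes [measurable]: "f \<in> borel_measurable borel" shows "H3 f \<in> borel_measurable MR2"
  unfolding H3_def using lborel.borel_measurable_nn_integral[of "\<lambda>s y. ennreal (qy s y) * f y" MR2]
  by simp

lemma H2_m[measurable]: assumes [measurable]: "e \<in> borel_measurable MR2" "f \<in> borel_measurable borel" shows "H2 e f \<in> borel_measurable MR1"
  unfolding H2_def by (rule sigma_finite_measure.borel_measurable_nn_integral[OF sfS]) measurable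

lemma H1_m[measurable]: assumes [measurable]: "d \<in> borel_measurable MR1" "e \<in> borel_measurable MR2" "f \<in> borel_measurable borel" shows "H1 d e f \<in> borel_measurable (MX \<Otimes>\<^sub>M MA)"
  unfolding H1_def by (rule sigma_finite_measure.borel_measurable_nn_integral[OF sfR]) measurable

lemma E_form:
  assumes polm: "(\<lambda>(x, a). pol x a) \<in> borel_measurable (MX \<Otimes>\<^sub>M MA)" and pol_nn: "\<And>x a. pol x a \<ge> 0"
    and [measurable]: "c \<in> borel_measurable (MX \<Otimes>\<^sub>M MA)" "d \<in> borel_measurable MR1"
      "e \<in> borel_measurable MR2" "f \<in> borel_measurable borel"
  shows "(\<integral>\<^sup>+ \<omega>. (case \<omega> of (x, a, r, s, y) \<Rightarrow> c (x, a) * d r * e s * f y) \<partial>jmeas MX MA MR1 MR2 px pol q1 q2 qy)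
    = (\<integral>\<^sup>+ xa. ennreal (px (fst xa) * pol (fst xa) (snd xa)) * (c xa * H1 d e f xa) \<partial>(MX \<Otimes>\<^sub>M MA))"
proof -
  have pm[measurable (raw)]: "g \<in> measurable L MX \<Longrightarrow> h \<in> measurable L MA \<Longrightarrow> (\<lambda>x. pol (g x) (h x)) \<in> borel_measurable L" for g h and L :: "'z measure"
    using measurable_compose[OF measurable_Pair polm] by simp
  let ?Om = "MX \<Otimes>\<^sub>M MA \<Otimes>\<^sub>M MR1 \<Otimes>\<^sub>M MR2 \<Otimes>\<^sub>M lborel"
  have jm: "(\<lambda>\<omega>. ennreal (jdens px pol q1 q2 qy \<omega>)) \<in> borel_measurable ?Om"
    unfolding jdens_def by measurable
  have Gm: "(\<lambda>\<omega>. case \<omega> of (x, a, r, s, y) \<Rightarrow> c (x, a) * d r * e s * f y) \<in> borel_measurable ?Om"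
    by measurable
  have "(\<integral>\<^sup>+ \<omega>. (case \<omega> of (x, a, r, s, y) \<Rightarrow> c (x, a) * d r * e s * f y) \<partial>jmeas MX MA MR1 MR2 px pol q1 q2 qy)
     = (\<integral>\<^sup>+ \<omega>. ennreal (jdens px pol q1 q2 qy \<omega>) * (case \<omega> of (x, a, r, s, y) \<Rightarrow> c (x, a) * d r * e s * f y) \<partial>?Om)"
    unfolding jmeas_def by (rule nn_integral_density[OF jm Gm])
  also have "\<dots> = (\<integral>\<^sup>+ x. \<integral>\<^sup>+ a. \<integral>\<^sup>+ r. \<integral>\<^sup>+ s. \<integral>\<^sup>+ y. ennreal (px x * pol x a * q1 x a r * q2 r s * qy s y) * (c (x, a) * d r * e s * f y) \<partial>lborel \<partial>MR2 \<partial>MR1 \<partial>MA \<partial>MX)"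
    by (subst iter5[OF sfA sfR sfS lborel.sigma_finite_measure_axioms]) (use jm Gm in \<open>simp_all add: jdens_def\<close>)
  also have "\<dots> = (\<integral>\<^sup>+ x. \<integral>\<^sup>+ a. \<integral>\<^sup>+ r. \<integral>\<^sup>+ s. ennreal (px x * pol x a * q1 x a r * q2 r s) * (c (x, a) * d r * e s) * H3 f s \<partial>MR2 \<partial>MR1 \<partial>MA \<partial>MX)"
  proof (intro nn_integral_cong)
    fix x a r s assume s: "s \<in> space MR2"
    have [measurable]: "(\<lambda>y. ennreal (qy s y) * f y) \<in> borel_measurable lborel" using s by measurable
    have "(\<integral>\<^sup>+ y. ennreal (px x * pol x a * q1 x a r * q2 r s * qy s y) * (c (x, a) * d r * e s * f y) \<partial>lborel)
      = (\<integral>\<^sup>+ y. (ennreal (px x * pol x a * q1 x a r * q2 r s) * (c (x, a) * d r * e s)) * (ennreal (qy s y) * f y) \<partial>lborel)"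
      by (intro nn_integral_cong) (simp add: ennreal_mult px_nn pol_nn q1_nn q2_nn qy_nn mult_ac)
    also have "\<dots> = ennreal (px x * pol x a * q1 x a r * q2 r s) * (c (x, a) * d r * e s) * H3 f s"
      unfolding H3_def by (rule nn_integral_cmult) measurable
    finally show "(\<integral>\<^sup>+ y. ennreal (px x * pol x a * q1 x a r * q2 r s * qy s y) * (c (x, a) * d r * e s * f y) \<partial>lborel)
      = ennreal (px x * pol x a * q1 x a r * q2 r s) * (c (x, a) * d r * e s) * H3 f s" .
  qed
  also have "\<dots> = (\<integral>\<^sup>+ x. \<integral>\<^sup>+ a. \<integral>\<^sup>+ r. ennreal (px x * pol x a * q1 x a r) * (c (x, a) * d r) * H2 e f r \<partial>MR1 \<partial>MA \<partial>MX)"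
  proof (intro nn_integral_cong)
    fix x a r assume r: "r \<in> space MR1"
    have [measurable]: "(\<lambda>s. ennreal (q2 r s) * (e s * H3 f s)) \<in> borel_measurable MR2" using r by measurable
    have "(\<integral>\<^sup>+ s. ennreal (px x * pol x a * q1 x a r * q2 r s) * (c (x, a) * d r * e s) * H3 f s \<partial>MR2)
      = (\<integral>\<^sup>+ s. (ennreal (px x * pol x a * q1 x a r) * (c (x, a) * d r)) * (ennreal (q2 r s) * (e s * H3 f s)) \<partial>MR2)"
      by (intro nn_integral_cong) (simp add: ennreal_mult px_nn pol_nn q1_nn q2_nn qy_nn mult_ac)
    also have "\<dots> = ennreal (px x * pol x a * q1 x a r) * (c (x, a) * d r) * H2 e f r"
      unfolding H2_def by (rule nn_integral_cmult) measurable
    finally show "(\<integral>\<^sup>+ s. ennreal (px x * pol x a * q1 x a r * q2 r s) * (c (x, a) * d r * e s) * H3 f s \<partial>MR2)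
      = ennreal (px x * pol x a * q1 x a r) * (c (x, a) * d r) * H2 e f r" .
  qed
  also have "\<dots> = (\<integral>\<^sup>+ x. \<integral>\<^sup>+ a. ennreal (px x * pol x a) * (c (x, a) * H1 d e f (x, a)) \<partial>MA \<partial>MX)"
  proof (intro nn_integral_cong)
    fix x a assume x: "x \<in> space MX" and a: "a \<in> space MA"
    have [measurable]: "(\<lambda>r. ennreal (q1 x a r) * (d r * H2 e f r)) \<in> borel_measurable MR1" using x a by measurable
    have "(\<integral>\<^sup>+ r. ennreal (px x * pol x a * q1 x a r) * (c (x, a) * d r) * H2 e f r \<partial>MR1)
      = (\<integral>\<^sup>+ r. (ennreal (px x * pol x a) * c (x, a)) * (ennreal (q1 x a r) * (d r * H2 e f r)) \<partial>MR1)"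
      by (intro nn_integral_cong) (simp add: ennreal_mult px_nn pol_nn q1_nn q2_nn qy_nn mult_ac)
    also have "\<dots> = ennreal (px x * pol x a) * (c (x, a) * H1 d e f (x, a))"
      unfolding H1_def by (subst nn_integral_cmult) (measurable, simp add: mult_ac)
    finally show "(\<integral>\<^sup>+ r. ennreal (px x * pol x a * q1 x a r) * (c (x, a) * d r) * H2 e f r \<partial>MR1)
      = ennreal (px x * pol x a) * (c (x, a) * H1 d e f (x, a))" .
  qed
  also have "\<dots> = (\<integral>\<^sup>+ xa. ennreal (px (fst xa) * pol (fst xa) (snd xa)) * (c xa * H1 d e f xa) \<partial>(MX \<Otimes>\<^sub>M MA))"
  proof -
    have m1: "H1 d e f \<in> borel_measurable (MX \<Otimes>\<^sub>M MA)" by (rule H1_m) measurable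
    have "(\<lambda>xa. ennreal (px (fst xa) * pol (fst xa) (snd xa)) * (c xa * H1 d e f xa)) \<in> borel_measurable (MX \<Otimes>\<^sub>M MA)"
      using m1 by measurable
    then show ?thesis by (subst iter2[OF sfA]) simp_all
  qed
  finally show ?thesis .
qed

end

context setting
begin

definition EE where
  "EE pol c d e f = (\<integral>\<^sup>+ \<omega>. (case \<omega> of (x, a, r, s, y) \<Rightarrow> c (x, a) * d r * e s * f y) \<partial>jmeas MX MA MR1 MR2 px pol q1 q2 qy)"

lemma Eb: assumes [measurable]: "c \<in> borel_measurable (MX \<Otimes>\<^sub>M MA)" "d \<in> borel_measurable MR1"
      "e \<in> borel_measurable MR2" "f \<in> borel_measurable borel"
  shows "EE pib c d e f = (\<integral>\<^sup>+ xa. ennreal (px (fst xa) * pib (fst xa) (snd xa)) * (c xa * H1 d e f xa) \<partial>(MX \<Otimes>\<^sub>M MA))"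
  unfolding EE_def by (rule E_form[OF pib_meas pib_nn assms])

lemma Es: assumes [measurable]: "c \<in> borel_measurable (MX \<Otimes>\<^sub>M MA)" "d \<in> borel_measurable MR1"
      "e \<in> borel_measurable MR2" "f \<in> borel_measurable borel"
  shows "EE pis c d e f = (\<integral>\<^sup>+ xa. ennreal (px (fst xa) * pis (fst xa) (snd xa)) * (c xa * H1 d e f xa) \<partial>(MX \<Otimes>\<^sub>M MA))"
  unfolding EE_def by (rule E_form[OF pis_meas pis_nn assms])

lemma Eb1: assumes [measurable]: "d \<in> borel_measurable MR1" "e \<in> borel_measurable MR2" "f \<in> borel_measurable borel"
  shows "EE pib (\<lambda>_. 1) d e f = (\<integral>\<^sup>+ r. ennreal (L1.Vb r) * (d r * H2 e f r) \<partial>MR1)"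
  by (subst Eb) (simp_all add: L1.tonelli_b H1_def)

lemma Es1: assumes [measurable]: "d \<in> borel_measurable MR1" "e \<in> borel_measurable MR2" "f \<in> borel_measurable borel"
  shows "EE pis (\<lambda>_. 1) d e f = (\<integral>\<^sup>+ r. ennreal (L1.Vs r) * (d r * H2 e f r) \<partial>MR1)"
  by (subst Es) (simp_all add: L1.tonelli_s H1_def)

lemma Eb2: assumes [measurable]: "e \<in> borel_measurable MR2" "f \<in> borel_measurable borel"
  shows "EE pib (\<lambda>_. 1) (\<lambda>_. 1) e f = (\<integral>\<^sup>+ s. ennreal (L2.Vb s) * (e s * H3 f s) \<partial>MR2)"
  by (subst Eb1) (simp_all add: L2.tonelli_b H2_def)

lemma Es2: assumes [measurable]: "e \<in> borel_measurable MR2" "f \<in> borel_measurable borel"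
  shows "EE pis (\<lambda>_. 1) (\<lambda>_. 1) e f = (\<integral>\<^sup>+ s. ennreal (L2.Vs s) * (e s * H3 f s) \<partial>MR2)"
  by (subst Es1) (simp_all add: L2.tonelli_s H2_def)

lemma Eb3: assumes [measurable]: "f \<in> borel_measurable borel"
  shows "EE pib (\<lambda>_. 1) (\<lambda>_. 1) (\<lambda>_. 1) f = (\<integral>\<^sup>+ y. ennreal (L3.Vb y) * f y \<partial>lborel)"
  by (subst Eb2) (simp_all add: L3.tonelli_b H3_def)

lemma Es3: assumes [measurable]: "f \<in> borel_measurable borel"
  shows "EE pis (\<lambda>_. 1) (\<lambda>_. 1) (\<lambda>_. 1) f = (\<integral>\<^sup>+ y. ennreal (L3.Vs y) * f y \<partial>lborel)"
  by (subst Es2) (simp_all add: L3.tonelli_s H3_def)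

lemma uw_pt: "px x * pib x a * (pis x a / pib x a) = px x * pis x a"
proof (cases "pib x a = 0")
  case True
  then have "pis x a = 0" using abs_cont[of x a] pis_nn[of x a] by linarith
  then show ?thesis using True by simp
qed simp

lemma mean_IPW: assumes [measurable]: "f \<in> borel_measurable borel"
  shows "EE pib (\<lambda>xa. ennreal (pis (fst xa) (snd xa) / pib (fst xa) (snd xa))) (\<lambda>_. 1) (\<lambda>_. 1) f
       = EE pis (\<lambda>_. 1) (\<lambda>_. 1) (\<lambda>_. 1) f"
proof -
  have "EE pib (\<lambda>xa. ennreal (pis (fst xa) (snd xa) / pib (fst xa) (snd xa))) (\<lambda>_. 1) (\<lambda>_. 1) f
    = (\<integral>\<^sup>+ xa. ennreal (px (fst xa) * pib (fst xa) (snd xa)) * (ennreal (pis (fst xa) (snd xa) / pib (fst xa) (snd xa)) * H1 (\<lambda>_. 1) (\<lambda>_. 1) f xa) \<partial>(MX \<Otimes>\<^sub>M MA))"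
    by (rule Eb) measurable
  also have "\<dots> = (\<integral>\<^sup>+ xa. ennreal (px (fst xa) * pis (fst xa) (snd xa)) * (1 * H1 (\<lambda>_. 1) (\<lambda>_. 1) f xa) \<partial>(MX \<Otimes>\<^sub>M MA))"
  proof (intro nn_integral_cong)
    fix xa :: "'x \<times> 'a"
    have "ennreal (px (fst xa) * pib (fst xa) (snd xa)) * ennreal (pis (fst xa) (snd xa) / pib (fst xa) (snd xa))
      = ennreal (px (fst xa) * pis (fst xa) (snd xa))"
      using uw_pt[of "fst xa" "snd xa"] by (simp add: ennreal_mult'[symmetric] px_nn pib_nn)
    then show "ennreal (px (fst xa) * pib (fst xa) (snd xa)) * (ennreal (pis (fst xa) (snd xa) / pib (fst xa) (snd xa)) * H1 (\<lambda>_. 1) (\<lambda>_. 1) f xa)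
      = ennreal (px (fst xa) * pis (fst xa) (snd xa)) * (1 * H1 (\<lambda>_. 1) (\<lambda>_. 1) f xa)"
      by (simp add: mult.assoc[symmetric])
  qed
  also have "\<dots> = EE pis (\<lambda>_. 1) (\<lambda>_. 1) (\<lambda>_. 1) f" by (rule Es[symmetric]) measurable
  finally show ?thesis .
qed

lemma mean_G1: assumes [measurable]: "f \<in> borel_measurable borel"
  shows "EE pib (\<lambda>_. 1) (\<lambda>r. ennreal (L1.w' r)) (\<lambda>_. 1) f = EE pis (\<lambda>_. 1) (\<lambda>_. 1) (\<lambda>_. 1) f"
proof -
  have "EE pib (\<lambda>_. 1) (\<lambda>r. ennreal (L1.w' r)) (\<lambda>_. 1) f = (\<integral>\<^sup>+ r. ennreal (L1.Vb r) * (ennreal (L1.w' r) * H2 (\<lambda>_. 1) f r) \<partial>MR1)"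
    by (rule Eb1) measurable
  also have "\<dots> = (\<integral>\<^sup>+ r. ennreal (L1.Vb r) * ennreal (L1.w' r) * H2 (\<lambda>_. 1) f r \<partial>MR1)"
    by (simp add: mult.assoc)
  also have "\<dots> = (\<integral>\<^sup>+ r. ennreal (L1.Vs r) * H2 (\<lambda>_. 1) f r \<partial>MR1)"
    by (rule L1.mean_step) measurable
  also have "\<dots> = EE pis (\<lambda>_. 1) (\<lambda>_. 1) (\<lambda>_. 1) f"
    by (subst Es1) simp_all
  finally show ?thesis .
qed

lemma mean_G2: assumes [measurable]: "f \<in> borel_measurable borel"
  shows "EE pib (\<lambda>_. 1) (\<lambda>_. 1) (\<lambda>s. ennreal (L2.w' s)) f = EE pis (\<lambda>_. 1) (\<lambda>_. 1) (\<lambda>_. 1) f"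
proof -
  have "EE pib (\<lambda>_. 1) (\<lambda>_. 1) (\<lambda>s. ennreal (L2.w' s)) f = (\<integral>\<^sup>+ s. ennreal (L2.Vb s) * (ennreal (L2.w' s) * H3 f s) \<partial>MR2)"
    by (rule Eb2) measurable
  also have "\<dots> = (\<integral>\<^sup>+ s. ennreal (L2.Vb s) * ennreal (L2.w' s) * H3 f s \<partial>MR2)"
    by (simp add: mult.assoc)
  also have "\<dots> = (\<integral>\<^sup>+ s. ennreal (L2.Vs s) * H3 f s \<partial>MR2)"
    by (rule L2.mean_step) measurable
  also have "\<dots> = EE pis (\<lambda>_. 1) (\<lambda>_. 1) (\<lambda>_. 1) f"
    by (subst Es2) simp_all
  finally show ?thesis .
qed

lemma mean_MR: assumes [measurable]: "f \<in> borel_measurable borel"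
  shows "EE pib (\<lambda>_. 1) (\<lambda>_. 1) (\<lambda>_. 1) (\<lambda>y. ennreal (L3.w' y) * f y) = EE pis (\<lambda>_. 1) (\<lambda>_. 1) (\<lambda>_. 1) f"
proof -
  have "EE pib (\<lambda>_. 1) (\<lambda>_. 1) (\<lambda>_. 1) (\<lambda>y. ennreal (L3.w' y) * f y) = (\<integral>\<^sup>+ y. ennreal (L3.Vb y) * (ennreal (L3.w' y) * f y) \<partial>lborel)"
    by (rule Eb3) measurable
  also have "\<dots> = (\<integral>\<^sup>+ y. ennreal (L3.Vb y) * ennreal (L3.w' y) * f y \<partial>lborel)"
    by (simp add: mult.assoc)
  also have "\<dots> = (\<integral>\<^sup>+ y. ennreal (L3.Vs y) * f y \<partial>lborel)"
    by (rule L3.mean_step) measurable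
  also have "\<dots> = EE pis (\<lambda>_. 1) (\<lambda>_. 1) (\<lambda>_. 1) f"
    by (subst Es3) simp_all
  finally show ?thesis .
qed

lemma sec_MR_G2: assumes [measurable]: "f \<in> borel_measurable borel"
  shows "EE pib (\<lambda>_. 1) (\<lambda>_. 1) (\<lambda>_. 1) (\<lambda>y. ennreal ((L3.w' y)\<^sup>2) * f y)
    \<le> EE pib (\<lambda>_. 1) (\<lambda>_. 1) (\<lambda>s. ennreal ((L2.w' s)\<^sup>2)) f"
proof -
  have "EE pib (\<lambda>_. 1) (\<lambda>_. 1) (\<lambda>_. 1) (\<lambda>y. ennreal ((L3.w' y)\<^sup>2) * f y) = (\<integral>\<^sup>+ y. ennreal (L3.Vb y) * (ennreal ((L3.w' y)\<^sup>2) * f y) \<partial>lborel)"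
    by (rule Eb3) measurable
  also have "\<dots> = (\<integral>\<^sup>+ y. ennreal (L3.Vb y) * ennreal ((L3.w' y)\<^sup>2) * f y \<partial>lborel)"
    by (simp add: mult.assoc)
  also have "\<dots> \<le> (\<integral>\<^sup>+ s. ennreal (L2.Vb s) * ennreal ((L2.w' s)\<^sup>2) * (\<integral>\<^sup>+ y. ennreal (qy s y) * f y \<partial>lborel) \<partial>MR2)"
    by (rule L3.second_step) measurable
  also have "\<dots> = EE pib (\<lambda>_. 1) (\<lambda>_. 1) (\<lambda>s. ennreal ((L2.w' s)\<^sup>2)) f"
    by (subst Eb2) (simp_all add: H3_def mult.assoc)
  finally show ?thesis .
qed

lemma sec_G2_G1: assumes [measurable]: "f \<in> borel_measurable borel"
  shows "EE pib (\<lambda>_. 1) (\<lambda>_. 1) (\<lambda>s. ennreal ((L2.w' s)\<^sup>2)) f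
    \<le> EE pib (\<lambda>_. 1) (\<lambda>r. ennreal ((L1.w' r)\<^sup>2)) (\<lambda>_. 1) f"
proof -
  have "EE pib (\<lambda>_. 1) (\<lambda>_. 1) (\<lambda>s. ennreal ((L2.w' s)\<^sup>2)) f = (\<integral>\<^sup>+ s. ennreal (L2.Vb s) * (ennreal ((L2.w' s)\<^sup>2) * H3 f s) \<partial>MR2)"
    by (rule Eb2) measurable
  also have "\<dots> = (\<integral>\<^sup>+ s. ennreal (L2.Vb s) * ennreal ((L2.w' s)\<^sup>2) * H3 f s \<partial>MR2)"
    by (simp add: mult.assoc)
  also have "\<dots> \<le> (\<integral>\<^sup>+ r. ennreal (L1.Vb r) * ennreal ((L1.w' r)\<^sup>2) * (\<integral>\<^sup>+ s. ennreal (q2 r s) * H3 f s \<partial>MR2) \<partial>MR1)"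
    by (rule L2.second_step) measurable
  also have "\<dots> = EE pib (\<lambda>_. 1) (\<lambda>r. ennreal ((L1.w' r)\<^sup>2)) (\<lambda>_. 1) f"
    by (subst Eb1) (simp_all add: H2_def mult.assoc)
  finally show ?thesis .
qed

lemma sec_G1_IPW: assumes [measurable]: "f \<in> borel_measurable borel"
  shows "EE pib (\<lambda>_. 1) (\<lambda>r. ennreal ((L1.w' r)\<^sup>2)) (\<lambda>_. 1) f
    \<le> EE pib (\<lambda>xa. ennreal ((pis (fst xa) (snd xa) / pib (fst xa) (snd xa))\<^sup>2)) (\<lambda>_. 1) (\<lambda>_. 1) f"
proof -
  have "EE pib (\<lambda>_. 1) (\<lambda>r. ennreal ((L1.w' r)\<^sup>2)) (\<lambda>_. 1) f = (\<integral>\<^sup>+ r. ennreal (L1.Vb r) * (ennreal ((L1.w' r)\<^sup>2) * H2 (\<lambda>_. 1) f r) \<partial>MR1)"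
    by (rule Eb1) measurable
  also have "\<dots> = (\<integral>\<^sup>+ r. ennreal (L1.Vb r) * ennreal ((L1.w' r)\<^sup>2) * H2 (\<lambda>_. 1) f r \<partial>MR1)"
    by (simp add: mult.assoc)
  also have "\<dots> \<le> (\<integral>\<^sup>+ xa. ennreal (px (fst xa) * pib (fst xa) (snd xa)) * ennreal ((pis (fst xa) (snd xa) / pib (fst xa) (snd xa))\<^sup>2) * (\<integral>\<^sup>+ r. ennreal (q1 (fst xa) (snd xa) r) * H2 (\<lambda>_. 1) f r \<partial>MR1) \<partial>(MX \<Otimes>\<^sub>M MA))"
    by (rule L1.second_step) measurable
  also have "\<dots> = EE pib (\<lambda>xa. ennreal ((pis (fst xa) (snd xa) / pib (fst xa) (snd xa))\<^sup>2)) (\<lambda>_. 1) (\<lambda>_. 1) f"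
    by (subst Eb) (measurable, simp add: H1_def mult.assoc)
  finally show ?thesis .
qed

end

lemma cm:
  assumes [measurable]: "g \<in> borel_measurable M" and "C \<ge> 0" and "\<And>y. g y \<ge> 0"
  shows "(\<integral>\<^sup>+ y. ennreal (C * g y) \<partial>M) = ennreal C * (\<integral>\<^sup>+ y. ennreal (g y) \<partial>M)"
  using assms by (simp add: ennreal_mult nn_integral_cmult)

context setting
begin

definition u :: "('x \<Rightarrow> 'a \<Rightarrow> real) \<Rightarrow> 'x \<times> 'a \<Rightarrow> real" where
  "u pol xa = px (fst xa) * pol (fst xa) (snd xa)"
definition V1 where "V1 pol r = enn2real (L1.PP (u pol) r)"
definition V2 where "V2 pol s = enn2real (L2.PP (V1 pol) s)"
definition V3 where "V3 pol y = enn2real (L3.PP (V2 pol) y)"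

lemma V1b: "L1.Vb = V1 pib" by (rule ext) (unfold L1.Vb_def V1_def u_def[abs_def], rule refl)
lemma V1s: "L1.Vs = V1 pis" by (rule ext) (unfold L1.Vs_def V1_def u_def[abs_def], rule refl)
lemma V2b: "L2.Vb = V2 pib" by (rule ext) (unfold L2.Vb_def V2_def, simp only: V1b)
lemma V2s: "L2.Vs = V2 pis" by (rule ext) (unfold L2.Vs_def V2_def, simp only: V1s)
lemma V3b: "L3.Vb = V3 pib" by (rule ext) (unfold L3.Vb_def V3_def, simp only: V2b)
lemma V3s: "L3.Vs = V3 pis" by (rule ext) (unfold L3.Vs_def V3_def, simp only: V2s)

lemma jdens_nn: "(\<And>x a. pol x a \<ge> 0) \<Longrightarrow> jdens px pol q1 q2 qy \<omega> \<ge> 0"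
  by (cases \<omega>) (auto simp: jdens_def px_nn q1_nn q2_nn qy_nn)

context
  fixes pol :: "'x \<Rightarrow> 'a \<Rightarrow> real"
  assumes polm: "(\<lambda>(x, a). pol x a) \<in> borel_measurable (MX \<Otimes>\<^sub>M MA)" and pol_nn: "\<And>x a. pol x a \<ge> 0"
    and pol_norm: "\<And>x. x \<in> space MX \<Longrightarrow> (\<integral>\<^sup>+ a. ennreal (pol x a) \<partial>MA) = 1"
begin

lemma pm[measurable (raw)]: "g \<in> measurable L MX \<Longrightarrow> h \<in> measurable L MA \<Longrightarrow> (\<lambda>x. pol (g x) (h x)) \<in> borel_measurable L"
  using measurable_compose[OF measurable_Pair polm] by simp

lemma u_m[measurable]: "u pol \<in> borel_measurable (MX \<Otimes>\<^sub>M MA)" unfolding u_def by measurable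
lemma u_nn: "u pol xa \<ge> 0" unfolding u_def by (simp add: px_nn pol_nn)
lemma u_int: "(\<integral>\<^sup>+ xa. ennreal (u pol xa) \<partial>(MX \<Otimes>\<^sub>M MA)) = 1"
  unfolding u_def by (rule pol_int[OF polm pol_nn pol_norm])

lemma V1_m[measurable]: "V1 pol \<in> borel_measurable MR1" unfolding V1_def by measurable
lemma V1_nn: "V1 pol r \<ge> 0" unfolding V1_def by simp
lemma V1_int: "(\<integral>\<^sup>+ r. ennreal (V1 pol r) \<partial>MR1) = 1"
  using L1.tonelli[OF u_m, of "\<lambda>_. 1"] u_nn u_int
  by (simp add: V1_def L1.k_norm cong: nn_integral_cong)

lemma V2_m[measurable]: "V2 pol \<in> borel_measurable MR2" unfolding V2_def by measurable
lemma V2_nn: "V2 pol r \<ge> 0" unfolding V2_def by simp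
lemma V2_int: "(\<integral>\<^sup>+ s. ennreal (V2 pol s) \<partial>MR2) = 1"
  using L2.tonelli[OF V1_m, of "\<lambda>_. 1"] V1_nn V1_int
  by (simp add: V2_def q2_norm cong: nn_integral_cong)

lemma marg1: assumes r: "r \<in> space MR1"
  shows "marg_r1 MX MA MR2 px pol q1 q2 qy r = V1 pol r"
proof -
  have jm: "(\<lambda>(x, a, s, y). jdens px pol q1 q2 qy (x, a, r, s, y)) \<in> borel_measurable (MX \<Otimes>\<^sub>M MA \<Otimes>\<^sub>M MR2 \<Otimes>\<^sub>M lborel)"
    using r unfolding jdens_def by measurable
  have "marg_r1 MX MA MR2 px pol q1 q2 qy r = enn2real (\<integral>\<^sup>+ p. ennreal ((\<lambda>(x, a, s, y). jdens px pol q1 q2 qy (x, a, r, s, y)) p) \<partial>(MX \<Otimes>\<^sub>M MA \<Otimes>\<^sub>M MR2 \<Otimes>\<^sub>M lborel))"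
    unfolding marg_r1_def by (rule integral_eq_nn_integral[OF jm]) (auto simp: jdens_nn pol_nn split: prod.splits)
  also have "(\<integral>\<^sup>+ p. ennreal ((\<lambda>(x, a, s, y). jdens px pol q1 q2 qy (x, a, r, s, y)) p) \<partial>(MX \<Otimes>\<^sub>M MA \<Otimes>\<^sub>M MR2 \<Otimes>\<^sub>M lborel))
    = (\<integral>\<^sup>+ x. \<integral>\<^sup>+ a. \<integral>\<^sup>+ s. \<integral>\<^sup>+ y. ennreal ((px x * pol x a * q1 x a r * q2 r s) * qy s y) \<partial>lborel \<partial>MR2 \<partial>MA \<partial>MX)"
    by (subst iter4[OF sfA sfS lborel.sigma_finite_measure_axioms]) (use jm in \<open>simp_all add: jdens_def\<close>)
  also have "\<dots> = (\<integral>\<^sup>+ x. \<integral>\<^sup>+ a. \<integral>\<^sup>+ s. ennreal ((px x * pol x a * q1 x a r) * q2 r s) \<partial>MR2 \<partial>MA \<partial>MX)"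
  proof (intro nn_integral_cong)
    fix x a s assume s: "s \<in> space MR2"
    show "(\<integral>\<^sup>+ y. ennreal ((px x * pol x a * q1 x a r * q2 r s) * qy s y) \<partial>lborel) = ennreal ((px x * pol x a * q1 x a r) * q2 r s)"
      by (subst cm) (use s in \<open>measurable\<close>, auto simp: px_nn pol_nn q1_nn q2_nn qy_nn qy_norm[OF s])
  qed
  also have "\<dots> = (\<integral>\<^sup>+ x. \<integral>\<^sup>+ a. ennreal (px x * pol x a * q1 x a r) \<partial>MA \<partial>MX)"
  proof (intro nn_integral_cong)
    fix x a
    show "(\<integral>\<^sup>+ s. ennreal ((px x * pol x a * q1 x a r) * q2 r s) \<partial>MR2) = ennreal (px x * pol x a * q1 x a r)"
      by (subst cm) (use r in \<open>measurable\<close>, auto simp: px_nn pol_nn q1_nn q2_nn q2_norm[OF r])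
  qed
  also have "\<dots> = L1.PP (u pol) r"
  proof -
    have "(\<lambda>m. ennreal (px (fst m) * pol (fst m) (snd m) * q1 (fst m) (snd m) r)) \<in> borel_measurable (MX \<Otimes>\<^sub>M MA)"
      using r by measurable
    then show ?thesis unfolding L1.PP_def u_def by (subst iter2[OF sfA]) (simp_all add: mult.assoc)
  qed
  finally show ?thesis by (simp add: V1_def)
qed

lemma marg2: assumes s: "s \<in> space MR2"
  shows "marg_r2 MX MA MR1 px pol q1 q2 qy s = V2 pol s"
proof -
  have jm: "(\<lambda>(x, a, r, y). jdens px pol q1 q2 qy (x, a, r, s, y)) \<in> borel_measurable (MX \<Otimes>\<^sub>M MA \<Otimes>\<^sub>M MR1 \<Otimes>\<^sub>M lborel)"
    using s unfolding jdens_def by measurable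
  have "marg_r2 MX MA MR1 px pol q1 q2 qy s = enn2real (\<integral>\<^sup>+ p. ennreal ((\<lambda>(x, a, r, y). jdens px pol q1 q2 qy (x, a, r, s, y)) p) \<partial>(MX \<Otimes>\<^sub>M MA \<Otimes>\<^sub>M MR1 \<Otimes>\<^sub>M lborel))"
    unfolding marg_r2_def by (rule integral_eq_nn_integral[OF jm]) (auto simp: jdens_nn pol_nn split: prod.splits)
  also have "(\<integral>\<^sup>+ p. ennreal ((\<lambda>(x, a, r, y). jdens px pol q1 q2 qy (x, a, r, s, y)) p) \<partial>(MX \<Otimes>\<^sub>M MA \<Otimes>\<^sub>M MR1 \<Otimes>\<^sub>M lborel))
    = (\<integral>\<^sup>+ x. \<integral>\<^sup>+ a. \<integral>\<^sup>+ r. \<integral>\<^sup>+ y. ennreal ((px x * pol x a * q1 x a r * q2 r s) * qy s y) \<partial>lborel \<partial>MR1 \<partial>MA \<partial>MX)"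
    by (subst iter4[OF sfA sfR lborel.sigma_finite_measure_axioms]) (use jm in \<open>simp_all add: jdens_def\<close>)
  also have "\<dots> = (\<integral>\<^sup>+ x. \<integral>\<^sup>+ a. \<integral>\<^sup>+ r. ennreal (px x * pol x a * q1 x a r * q2 r s) \<partial>MR1 \<partial>MA \<partial>MX)"
  proof (intro nn_integral_cong)
    fix x a r
    show "(\<integral>\<^sup>+ y. ennreal ((px x * pol x a * q1 x a r * q2 r s) * qy s y) \<partial>lborel) = ennreal (px x * pol x a * q1 x a r * q2 r s)"
      by (subst cm) (use s in \<open>measurable\<close>, auto simp: px_nn pol_nn q1_nn q2_nn qy_nn qy_norm[OF s])
  qed
  also have "\<dots> = (\<integral>\<^sup>+ xa. ennreal (u pol xa) * (\<integral>\<^sup>+ r. ennreal (q1 (fst xa) (snd xa) r) * ennreal (q2 r s) \<partial>MR1) \<partial>(MX \<Otimes>\<^sub>M MA))"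
  proof -
    have "(\<lambda>xa. ennreal (u pol xa) * (\<integral>\<^sup>+ r. ennreal (q1 (fst xa) (snd xa) r) * ennreal (q2 r s) \<partial>MR1)) \<in> borel_measurable (MX \<Otimes>\<^sub>M MA)"
      using s by measurable
    then have "(\<integral>\<^sup>+ xa. ennreal (u pol xa) * (\<integral>\<^sup>+ r. ennreal (q1 (fst xa) (snd xa) r) * ennreal (q2 r s) \<partial>MR1) \<partial>(MX \<Otimes>\<^sub>M MA))
      = (\<integral>\<^sup>+ x. \<integral>\<^sup>+ a. ennreal (u pol (x, a)) * (\<integral>\<^sup>+ r. ennreal (q1 x a r) * ennreal (q2 r s) \<partial>MR1) \<partial>MA \<partial>MX)"
      by (subst iter2[OF sfA]) simp_all
    also have "\<dots> = (\<integral>\<^sup>+ x. \<integral>\<^sup>+ a. \<integral>\<^sup>+ r. ennreal (px x * pol x a * q1 x a r * q2 r s) \<partial>MR1 \<partial>MA \<partial>MX)"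
    proof (intro nn_integral_cong)
      fix x a assume x: "x \<in> space MX" and a: "a \<in> space MA"
      have [measurable]: "(\<lambda>r. ennreal (q1 x a r) * ennreal (q2 r s)) \<in> borel_measurable MR1" using x a s by measurable
      show "ennreal (u pol (x, a)) * (\<integral>\<^sup>+ r. ennreal (q1 x a r) * ennreal (q2 r s) \<partial>MR1) = (\<integral>\<^sup>+ r. ennreal (px x * pol x a * q1 x a r * q2 r s) \<partial>MR1)"
        by (subst nn_integral_cmult[symmetric]) (simp_all add: u_def ennreal_mult px_nn pol_nn q1_nn q2_nn mult.assoc)
    qed
    finally show ?thesis by simp
  qed
  also have "\<dots> = (\<integral>\<^sup>+ r. ennreal (V1 pol r) * ennreal (q2 r s) \<partial>MR1)"
    unfolding V1_def by (rule L1.tonelli[symmetric, OF u_m _ u_nn]) (use s u_int in \<open>measurable, simp\<close>)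
  also have "\<dots> = L2.PP (V1 pol) s"
    unfolding L2.PP_def by (simp add: ennreal_mult V1_nn q2_nn)
  finally show ?thesis by (simp add: V2_def)
qed

lemma margy: "marg_y MX MA MR1 MR2 px pol q1 q2 qy y = V3 pol y"
proof -
  have y: "y \<in> space lborel" by simp
  have jm: "(\<lambda>(x, a, r, s). jdens px pol q1 q2 qy (x, a, r, s, y)) \<in> borel_measurable (MX \<Otimes>\<^sub>M MA \<Otimes>\<^sub>M MR1 \<Otimes>\<^sub>M MR2)"
    using y unfolding jdens_def by measurable
  have "marg_y MX MA MR1 MR2 px pol q1 q2 qy y = enn2real (\<integral>\<^sup>+ p. ennreal ((\<lambda>(x, a, r, s). jdens px pol q1 q2 qy (x, a, r, s, y)) p) \<partial>(MX \<Otimes>\<^sub>M MA \<Otimes>\<^sub>M MR1 \<Otimes>\<^sub>M MR2))"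
    unfolding marg_y_def by (rule integral_eq_nn_integral[OF jm]) (auto simp: jdens_nn pol_nn split: prod.splits)
  also have "(\<integral>\<^sup>+ p. ennreal ((\<lambda>(x, a, r, s). jdens px pol q1 q2 qy (x, a, r, s, y)) p) \<partial>(MX \<Otimes>\<^sub>M MA \<Otimes>\<^sub>M MR1 \<Otimes>\<^sub>M MR2))
    = (\<integral>\<^sup>+ x. \<integral>\<^sup>+ a. \<integral>\<^sup>+ r. \<integral>\<^sup>+ s. ennreal (px x * pol x a * q1 x a r * q2 r s * qy s y) \<partial>MR2 \<partial>MR1 \<partial>MA \<partial>MX)"
    by (subst iter4[OF sfA sfR sfS]) (use jm in \<open>simp_all add: jdens_def\<close>)
  also have "\<dots> = (\<integral>\<^sup>+ xa. ennreal (u pol xa) * (\<integral>\<^sup>+ r. ennreal (q1 (fst xa) (snd xa) r) * (\<integral>\<^sup>+ s. ennreal (q2 r s) * ennreal (qy s y) \<partial>MR2) \<partial>MR1) \<partial>(MX \<Otimes>\<^sub>M MA))"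
  proof -
    have "(\<lambda>xa. ennreal (u pol xa) * (\<integral>\<^sup>+ r. ennreal (q1 (fst xa) (snd xa) r) * (\<integral>\<^sup>+ s. ennreal (q2 r s) * ennreal (qy s y) \<partial>MR2) \<partial>MR1)) \<in> borel_measurable (MX \<Otimes>\<^sub>M MA)"
      by measurable
    then have "(\<integral>\<^sup>+ xa. ennreal (u pol xa) * (\<integral>\<^sup>+ r. ennreal (q1 (fst xa) (snd xa) r) * (\<integral>\<^sup>+ s. ennreal (q2 r s) * ennreal (qy s y) \<partial>MR2) \<partial>MR1) \<partial>(MX \<Otimes>\<^sub>M MA))
      = (\<integral>\<^sup>+ x. \<integral>\<^sup>+ a. ennreal (u pol (x, a)) * (\<integral>\<^sup>+ r. ennreal (q1 x a r) * (\<integral>\<^sup>+ s. ennreal (q2 r s) * ennreal (qy s y) \<partial>MR2) \<partial>MR1) \<partial>MA \<partial>MX)"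
      by (subst iter2[OF sfA]) simp_all
    also have "\<dots> = (\<integral>\<^sup>+ x. \<integral>\<^sup>+ a. \<integral>\<^sup>+ r. \<integral>\<^sup>+ s. ennreal (px x * pol x a * q1 x a r * q2 r s * qy s y) \<partial>MR2 \<partial>MR1 \<partial>MA \<partial>MX)"
    proof (intro nn_integral_cong)
      fix x a assume x: "x \<in> space MX" and a: "a \<in> space MA"
      have [measurable]: "(\<lambda>r. ennreal (q1 x a r) * (\<integral>\<^sup>+ s. ennreal (q2 r s) * ennreal (qy s y) \<partial>MR2)) \<in> borel_measurable MR1" using x a by measurable
      have "ennreal (u pol (x, a)) * (\<integral>\<^sup>+ r. ennreal (q1 x a r) * (\<integral>\<^sup>+ s. ennreal (q2 r s) * ennreal (qy s y) \<partial>MR2) \<partial>MR1)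
        = (\<integral>\<^sup>+ r. ennreal (u pol (x, a)) * (ennreal (q1 x a r) * (\<integral>\<^sup>+ s. ennreal (q2 r s) * ennreal (qy s y) \<partial>MR2)) \<partial>MR1)"
        by (rule nn_integral_cmult[symmetric]) measurable
      also have "\<dots> = (\<integral>\<^sup>+ r. \<integral>\<^sup>+ s. ennreal (px x * pol x a * q1 x a r * q2 r s * qy s y) \<partial>MR2 \<partial>MR1)"
      proof (intro nn_integral_cong)
        fix r assume r: "r \<in> space MR1"
        have [measurable]: "(\<lambda>s. ennreal (q2 r s) * ennreal (qy s y)) \<in> borel_measurable MR2" using r by measurable
        show "ennreal (u pol (x, a)) * (ennreal (q1 x a r) * (\<integral>\<^sup>+ s. ennreal (q2 r s) * ennreal (qy s y) \<partial>MR2))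
          = (\<integral>\<^sup>+ s. ennreal (px x * pol x a * q1 x a r * q2 r s * qy s y) \<partial>MR2)"
          by (simp add: nn_integral_cmult[symmetric] u_def ennreal_mult px_nn pol_nn q1_nn q2_nn qy_nn mult.assoc)
      qed
      finally show "ennreal (u pol (x, a)) * (\<integral>\<^sup>+ r. ennreal (q1 x a r) * (\<integral>\<^sup>+ s. ennreal (q2 r s) * ennreal (qy s y) \<partial>MR2) \<partial>MR1)
        = (\<integral>\<^sup>+ r. \<integral>\<^sup>+ s. ennreal (px x * pol x a * q1 x a r * q2 r s * qy s y) \<partial>MR2 \<partial>MR1)" .
    qed
    finally show ?thesis by simp
  qed
  also have "\<dots> = (\<integral>\<^sup>+ r. ennreal (V1 pol r) * (\<integral>\<^sup>+ s. ennreal (q2 r s) * ennreal (qy s y) \<partial>MR2) \<partial>MR1)"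
    unfolding V1_def by (rule L1.tonelli[symmetric, OF u_m _ u_nn]) (use u_int in \<open>measurable, simp\<close>)
  also have "\<dots> = (\<integral>\<^sup>+ s. ennreal (V2 pol s) * ennreal (qy s y) \<partial>MR2)"
    unfolding V2_def by (rule L2.tonelli[symmetric, OF V1_m _ V1_nn]) (use V1_int in \<open>measurable, simp\<close>)
  also have "\<dots> = L3.PP (V2 pol) y"
    unfolding L3.PP_def by (simp add: ennreal_mult V2_nn qy_nn)
  finally show ?thesis by (simp add: V3_def)
qed

end

end

lemma finish:
  fixes g :: "'b \<Rightarrow> real" and Y :: "'c \<Rightarrow> real"
  assumes Pb: "prob_space Pb" and Ps: "prob_space Ps"
    and gm[measurable]: "g \<in> borel_measurable Pb" and Ym[measurable]: "Y \<in> borel_measurable Ps"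
    and pos: "(\<integral>\<^sup>+ x. ennreal (g x) \<partial>Pb) = (\<integral>\<^sup>+ x. ennreal (Y x) \<partial>Ps)"
    and neg: "(\<integral>\<^sup>+ x. ennreal (- g x) \<partial>Pb) = (\<integral>\<^sup>+ x. ennreal (- Y x) \<partial>Ps)"
    and sq: "(\<integral>\<^sup>+ x. ennreal ((g x)\<^sup>2) \<partial>Pb) \<noteq> \<infinity>"
  shows "integrable Pb (\<lambda>x. (g x)\<^sup>2)" "(\<integral>x. g x \<partial>Pb) = (\<integral>x. Y x \<partial>Ps)"
    "var Pb g = enn2real (\<integral>\<^sup>+ x. ennreal ((g x)\<^sup>2) \<partial>Pb) - (\<integral>x. Y x \<partial>Ps)\<^sup>2"
proof -
  interpret Pb: prob_space Pb by fact
  show g2: "integrable Pb (\<lambda>x. (g x)\<^sup>2)"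
    by (rule integrableI_nonneg) (use sq in \<open>auto simp: less_top infinity_ennreal_def\<close>)
  have gi: "integrable Pb g" by (rule Pb.square_integrable_imp_integrable[OF gm g2])
  have Yi: "integrable Ps Y"
    unfolding real_integrable_def using integrableD(2,3)[OF gi] pos neg by simp
  show mean: "(\<integral>x. g x \<partial>Pb) = (\<integral>x. Y x \<partial>Ps)"
    by (simp add: real_lebesgue_integral_def[OF gi] real_lebesgue_integral_def[OF Yi] pos neg)
  have "var Pb g = Pb.variance g" unfolding var_def ..
  also have "\<dots> = Pb.expectation (\<lambda>x. (g x)\<^sup>2) - (Pb.expectation g)\<^sup>2"
    by (rule Pb.variance_eq[OF gi g2])
  also have "Pb.expectation (\<lambda>x. (g x)\<^sup>2) = enn2real (\<integral>\<^sup>+ x. ennreal ((g x)\<^sup>2) \<partial>Pb)"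
    by (rule integral_eq_nn_integral) auto
  finally show "var Pb g = enn2real (\<integral>\<^sup>+ x. ennreal ((g x)\<^sup>2) \<partial>Pb) - (\<integral>x. Y x \<partial>Ps)\<^sup>2"
    using mean by simp
qed

context setting
begin

abbreviation "Om \<equiv> MX \<Otimes>\<^sub>M MA \<Otimes>\<^sub>M MR1 \<Otimes>\<^sub>M MR2 \<Otimes>\<^sub>M lborel"

lemma space_jmeas: "space (jmeas MX MA MR1 MR2 px pol q1 q2 qy) = space Om"
  unfolding jmeas_def by simp

lemma EE_cong:
  assumes "\<And>x a r s y. x \<in> space MX \<Longrightarrow> a \<in> space MA \<Longrightarrow> r \<in> space MR1 \<Longrightarrow> s \<in> space MR2 \<Longrightarrow>
      G (x, a, r, s, y) = c (x, a) * d r * e s * f y"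
  shows "(\<integral>\<^sup>+ \<omega>. G \<omega> \<partial>jmeas MX MA MR1 MR2 px pol q1 q2 qy) = EE pol c d e f"
  unfolding EE_def using assms
  by (intro nn_integral_cong) (auto simp: space_jmeas space_pair_measure)

lemma prob_b: "prob_space (jmeas MX MA MR1 MR2 px pib q1 q2 qy)"
proof
  have "emeasure (jmeas MX MA MR1 MR2 px pib q1 q2 qy) (space (jmeas MX MA MR1 MR2 px pib q1 q2 qy))
     = (\<integral>\<^sup>+ \<omega>. 1 \<partial>jmeas MX MA MR1 MR2 px pib q1 q2 qy)" by simp
  also have "\<dots> = EE pib (\<lambda>_. 1) (\<lambda>_. 1) (\<lambda>_. 1) (\<lambda>_. 1)" by (rule EE_cong) simp
  also have "\<dots> = 1"
    using pol_int[OF pib_meas pib_nn pib_norm]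
    by (simp add: Eb3 L3.Vb_int L2.Vb_int L1.Vb_int)
  finally show "emeasure (jmeas MX MA MR1 MR2 px pib q1 q2 qy) (space (jmeas MX MA MR1 MR2 px pib q1 q2 qy)) = 1" .
qed

lemma prob_s: "prob_space (jmeas MX MA MR1 MR2 px pis q1 q2 qy)"
proof
  have "emeasure (jmeas MX MA MR1 MR2 px pis q1 q2 qy) (space (jmeas MX MA MR1 MR2 px pis q1 q2 qy))
     = (\<integral>\<^sup>+ \<omega>. 1 \<partial>jmeas MX MA MR1 MR2 px pis q1 q2 qy)" by simp
  also have "\<dots> = EE pis (\<lambda>_. 1) (\<lambda>_. 1) (\<lambda>_. 1) (\<lambda>_. 1)" by (rule EE_cong) simp
  also have "\<dots> = 1"
    using pol_int[OF pis_meas pis_nn pis_norm]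
    by (simp add: Es3 L3.Vs_int L2.Vs_int L1.Vs_int)
  finally show "emeasure (jmeas MX MA MR1 MR2 px pis q1 q2 qy) (space (jmeas MX MA MR1 MR2 px pis q1 q2 qy)) = 1" .
qed

lemma yof_m[measurable]: "yof \<in> borel_measurable Om"
  unfolding yof_def by measurable

lemma weight_facts:
  fixes W :: "'x \<times> 'a \<times> 'r \<times> 's \<times> real \<Rightarrow> real"
    and c :: "'x \<times> 'a \<Rightarrow> ennreal" and d :: "'r \<Rightarrow> ennreal" and e :: "'s \<Rightarrow> ennreal" and h :: "real \<Rightarrow> ennreal"
  assumes Wm: "W \<in> borel_measurable Om"
    and Wnn: "\<And>\<omega>. \<omega> \<in> space Om \<Longrightarrow> W \<omega> \<ge> 0"
    and rep: "\<And>x a r s y. x \<in> space MX \<Longrightarrow> a \<in> space MA \<Longrightarrow> r \<in> space MR1 \<Longrightarrow> s \<in> space MR2 \<Longrightarrow>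
       ennreal (W (x, a, r, s, y)) = c (x, a) * d r * e s * h y"
    and [measurable]: "c \<in> borel_measurable (MX \<Otimes>\<^sub>M MA)" "d \<in> borel_measurable MR1"
      "e \<in> borel_measurable MR2" "h \<in> borel_measurable borel"
    and mean: "\<And>f. f \<in> borel_measurable borel \<Longrightarrow> EE pib c d e (\<lambda>y. h y * f y) = EE pis (\<lambda>_. 1) (\<lambda>_. 1) (\<lambda>_. 1) f"
  shows "(\<lambda>\<omega>. W \<omega> * yof \<omega>) \<in> borel_measurable (jmeas MX MA MR1 MR2 px pib q1 q2 qy)"
    and "(\<integral>\<^sup>+ \<omega>. ennreal (W \<omega> * yof \<omega>) \<partial>jmeas MX MA MR1 MR2 px pib q1 q2 qy) = (\<integral>\<^sup>+ \<omega>. ennreal (yof \<omega>) \<partial>jmeas MX MA MR1 MR2 px pis q1 q2 qy)"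
    and "(\<integral>\<^sup>+ \<omega>. ennreal (- (W \<omega> * yof \<omega>)) \<partial>jmeas MX MA MR1 MR2 px pib q1 q2 qy) = (\<integral>\<^sup>+ \<omega>. ennreal (- yof \<omega>) \<partial>jmeas MX MA MR1 MR2 px pis q1 q2 qy)"
    and "(\<integral>\<^sup>+ \<omega>. ennreal ((W \<omega> * yof \<omega>)\<^sup>2) \<partial>jmeas MX MA MR1 MR2 px pib q1 q2 qy)
        = EE pib (\<lambda>xa. (c xa)\<^sup>2) (\<lambda>r. (d r)\<^sup>2) (\<lambda>s. (e s)\<^sup>2) (\<lambda>y. (h y)\<^sup>2 * ennreal (y\<^sup>2))"
proof -
  have [measurable]: "W \<in> borel_measurable Om" by (rule Wm)
  show "(\<lambda>\<omega>. W \<omega> * yof \<omega>) \<in> borel_measurable (jmeas MX MA MR1 MR2 px pib q1 q2 qy)"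
    unfolding jmeas_def measurable_density_eq1 by measurable
  have Wnn': "x \<in> space MX \<Longrightarrow> a \<in> space MA \<Longrightarrow> r \<in> space MR1 \<Longrightarrow> s \<in> space MR2 \<Longrightarrow> W (x, a, r, s, y) \<ge> 0" for x a r s y
    using Wnn[of "(x, a, r, s, y)"] by (simp add: space_pair_measure)
  have ys: "(\<integral>\<^sup>+ \<omega>. f (yof \<omega>) \<partial>jmeas MX MA MR1 MR2 px pis q1 q2 qy) = EE pis (\<lambda>_. 1) (\<lambda>_. 1) (\<lambda>_. 1) f" for f
    by (rule EE_cong) (simp add: yof_def)
  have "(\<integral>\<^sup>+ \<omega>. ennreal (W \<omega> * yof \<omega>) \<partial>jmeas MX MA MR1 MR2 px pib q1 q2 qy) = EE pib c d e (\<lambda>y. h y * ennreal y)"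
    by (rule EE_cong) (simp add: yof_def ennreal_mult' Wnn' rep mult.assoc)
  also have "\<dots> = EE pis (\<lambda>_. 1) (\<lambda>_. 1) (\<lambda>_. 1) (\<lambda>y. ennreal y)" by (rule mean) measurable
  also have "\<dots> = (\<integral>\<^sup>+ \<omega>. ennreal (yof \<omega>) \<partial>jmeas MX MA MR1 MR2 px pis q1 q2 qy)" by (rule ys[symmetric])
  finally show "(\<integral>\<^sup>+ \<omega>. ennreal (W \<omega> * yof \<omega>) \<partial>jmeas MX MA MR1 MR2 px pib q1 q2 qy) = (\<integral>\<^sup>+ \<omega>. ennreal (yof \<omega>) \<partial>jmeas MX MA MR1 MR2 px pis q1 q2 qy)" .
  have "(\<integral>\<^sup>+ \<omega>. ennreal (- (W \<omega> * yof \<omega>)) \<partial>jmeas MX MA MR1 MR2 px pib q1 q2 qy) = EE pib c d e (\<lambda>y. h y * ennreal (- y))"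
  proof (rule EE_cong)
    fix x a r s y assume sp: "x \<in> space MX" "a \<in> space MA" "r \<in> space MR1" "s \<in> space MR2"
    have "ennreal (- (W (x, a, r, s, y) * yof (x, a, r, s, y))) = ennreal (W (x, a, r, s, y) * (- y))"
      by (simp add: yof_def)
    also have "\<dots> = ennreal (W (x, a, r, s, y)) * ennreal (- y)" by (rule ennreal_mult'[OF Wnn'[OF sp]])
    finally show "ennreal (- (W (x, a, r, s, y) * yof (x, a, r, s, y))) = c (x, a) * d r * e s * (h y * ennreal (- y))"
      using rep[OF sp] by (simp add: mult.assoc)
  qed
  also have "\<dots> = EE pis (\<lambda>_. 1) (\<lambda>_. 1) (\<lambda>_. 1) (\<lambda>y. ennreal (- y))" by (rule mean) measurable
  also have "\<dots> = (\<integral>\<^sup>+ \<omega>. ennreal (- yof \<omega>) \<partial>jmeas MX MA MR1 MR2 px pis q1 q2 qy)" by (rule ys[symmetric])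
  finally show "(\<integral>\<^sup>+ \<omega>. ennreal (- (W \<omega> * yof \<omega>)) \<partial>jmeas MX MA MR1 MR2 px pib q1 q2 qy) = (\<integral>\<^sup>+ \<omega>. ennreal (- yof \<omega>) \<partial>jmeas MX MA MR1 MR2 px pis q1 q2 qy)" .
  show "(\<integral>\<^sup>+ \<omega>. ennreal ((W \<omega> * yof \<omega>)\<^sup>2) \<partial>jmeas MX MA MR1 MR2 px pib q1 q2 qy)
        = EE pib (\<lambda>xa. (c xa)\<^sup>2) (\<lambda>r. (d r)\<^sup>2) (\<lambda>s. (e s)\<^sup>2) (\<lambda>y. (h y)\<^sup>2 * ennreal (y\<^sup>2))"
  proof (rule EE_cong)
    fix x a r s y assume sp: "x \<in> space MX" "a \<in> space MA" "r \<in> space MR1" "s \<in> space MR2"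
    have "ennreal ((W (x, a, r, s, y) * yof (x, a, r, s, y))\<^sup>2) = (ennreal (W (x, a, r, s, y)))\<^sup>2 * ennreal (y\<^sup>2)"
      using Wnn'[OF sp] by (simp add: yof_def power_mult_distrib ennreal_mult' ennreal_power)
    then show "ennreal ((W (x, a, r, s, y) * yof (x, a, r, s, y))\<^sup>2) = (c (x, a))\<^sup>2 * (d r)\<^sup>2 * (e s)\<^sup>2 * ((h y)\<^sup>2 * ennreal (y\<^sup>2))"
      using rep[OF sp] by (simp add: power_mult_distrib mult.assoc)
  qed
qed

end

context setting
begin

lemma combine:
  assumes gm: "(\<lambda>\<omega>. W \<omega> * yof \<omega>) \<in> borel_measurable (jmeas MX MA MR1 MR2 px pib q1 q2 qy)"
    and pos: "(\<integral>\<^sup>+ \<omega>. ennreal (W \<omega> * yof \<omega>) \<partial>jmeas MX MA MR1 MR2 px pib q1 q2 qy) = (\<integral>\<^sup>+ \<omega>. ennreal (yof \<omega>) \<partial>jmeas MX MA MR1 MR2 px pis q1 q2 qy)"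
    and neg: "(\<integral>\<^sup>+ \<omega>. ennreal (- (W \<omega> * yof \<omega>)) \<partial>jmeas MX MA MR1 MR2 px pib q1 q2 qy) = (\<integral>\<^sup>+ \<omega>. ennreal (- yof \<omega>) \<partial>jmeas MX MA MR1 MR2 px pis q1 q2 qy)"
    and sqfin: "(\<integral>\<^sup>+ \<omega>. ennreal ((W \<omega> * yof \<omega>)\<^sup>2) \<partial>jmeas MX MA MR1 MR2 px pib q1 q2 qy) \<noteq> \<infinity>"
    and n: "n \<ge> 1"
  shows "(\<integral>\<omega>. west n W \<omega> \<partial>PiM {..<n} (\<lambda>_. jmeas MX MA MR1 MR2 px pib q1 q2 qy)) = (\<integral>z. yof z \<partial>jmeas MX MA MR1 MR2 px pis q1 q2 qy)"
    and "var (PiM {..<n} (\<lambda>_. jmeas MX MA MR1 MR2 px pib q1 q2 qy)) (west n W) =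
      (enn2real (\<integral>\<^sup>+ \<omega>. ennreal ((W \<omega> * yof \<omega>)\<^sup>2) \<partial>jmeas MX MA MR1 MR2 px pib q1 q2 qy) - (\<integral>z. yof z \<partial>jmeas MX MA MR1 MR2 px pis q1 q2 qy)\<^sup>2) / real n"
proof -
  have ym: "yof \<in> borel_measurable (jmeas MX MA MR1 MR2 px pis q1 q2 qy)"
    unfolding jmeas_def measurable_density_eq1 by (rule yof_m)
  note F = finish[OF prob_b prob_s gm ym pos neg sqfin]
  note SP = sample_part[OF prob_b gm F(1) n]
  have wf: "west n W = (\<lambda>\<omega>. (\<Sum>i<n. W (\<omega> i) * yof (\<omega> i)) / real n)" by (simp add: fun_eq_iff west_def)
  show "(\<integral>\<omega>. west n W \<omega> \<partial>PiM {..<n} (\<lambda>_. jmeas MX MA MR1 MR2 px pib q1 q2 qy)) = (\<integral>z. yof z \<partial>jmeas MX MA MR1 MR2 px pis q1 q2 qy)"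
    unfolding wf using SP(1) F(2) by simp
  show "var (PiM {..<n} (\<lambda>_. jmeas MX MA MR1 MR2 px pib q1 q2 qy)) (west n W) =
      (enn2real (\<integral>\<^sup>+ \<omega>. ennreal ((W \<omega> * yof \<omega>)\<^sup>2) \<partial>jmeas MX MA MR1 MR2 px pib q1 q2 qy) - (\<integral>z. yof z \<partial>jmeas MX MA MR1 MR2 px pis q1 q2 qy)\<^sup>2) / real n"
    unfolding wf using SP(2) F(3) by simp
qed

lemma wG1_eq: "r \<in> space MR1 \<Longrightarrow> marg_r1 MX MA MR2 px pis q1 q2 qy r / marg_r1 MX MA MR2 px pib q1 q2 qy r = L1.w' r"
  by (simp add: marg1[OF pis_meas pis_nn pis_norm] marg1[OF pib_meas pib_nn pib_norm] L1.w'_def V1b V1s)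

lemma wG2_eq: "s \<in> space MR2 \<Longrightarrow> marg_r2 MX MA MR1 px pis q1 q2 qy s / marg_r2 MX MA MR1 px pib q1 q2 qy s = L2.w' s"
  by (simp add: marg2[OF pis_meas pis_nn pis_norm] marg2[OF pib_meas pib_nn pib_norm] L2.w'_def V2b V2s)

lemma wMR_eq: "marg_y MX MA MR1 MR2 px pis q1 q2 qy y / marg_y MX MA MR1 MR2 px pib q1 q2 qy y = L3.w' y"
  by (simp add: margy[OF pis_meas pis_nn pis_norm] margy[OF pib_meas pib_nn pib_norm] L3.w'_def V3b V3s)

end

context setting
begin

lemma final:
  fixes n :: nat
  assumes sq_int: "integrable (jmeas MX MA MR1 MR2 px pib q1 q2 qy)
                   (\<lambda>(x, a, r, s, y). (pis x a / pib x a * y)\<^sup>2)"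
    and n_pos: "n \<ge> 1"
  shows
   "let Pb = jmeas MX MA MR1 MR2 px pib q1 q2 qy;
        Ps = jmeas MX MA MR1 MR2 px pis q1 q2 qy;
        S = PiM {..<n} (\<lambda>_. Pb);
        wIPW = (\<lambda>(x, a, r, s, y). pis x a / pib x a);
        wG1 = (\<lambda>(x, a, r, s, y). marg_r1 MX MA MR2 px pis q1 q2 qy r / marg_r1 MX MA MR2 px pib q1 q2 qy r);
        wG2 = (\<lambda>(x, a, r, s, y). marg_r2 MX MA MR1 px pis q1 q2 qy s / marg_r2 MX MA MR1 px pib q1 q2 qy s);
        wMR = (\<lambda>(x, a, r, s, y). marg_y MX MA MR1 MR2 px pis q1 q2 qy y / marg_y MX MA MR1 MR2 px pib q1 q2 qy y);
        vS = (\<integral>z. yof z \<partial>Ps)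
    in (\<integral>\<omega>. west n wIPW \<omega> \<partial>S) = vS \<and> (\<integral>\<omega>. west n wG1 \<omega> \<partial>S) = vS \<and>
       (\<integral>\<omega>. west n wG2 \<omega> \<partial>S) = vS \<and> (\<integral>\<omega>. west n wMR \<omega> \<partial>S) = vS \<and>
       var S (west n wIPW) \<ge> var S (west n wG1) \<and>
       var S (west n wG1) \<ge> var S (west n wG2) \<and>
       var S (west n wG2) \<ge> var S (west n wMR)"
proof -
  let ?Pb = "jmeas MX MA MR1 MR2 px pib q1 q2 qy"
  let ?WI = "\<lambda>(x::'x, a::'a, r::'r, s::'s, y::real). pis x a / pib x a"
  let ?W1 = "\<lambda>(x::'x, a::'a, r::'r, s::'s, y::real). marg_r1 MX MA MR2 px pis q1 q2 qy r / marg_r1 MX MA MR2 px pib q1 q2 qy r"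
  let ?W2 = "\<lambda>(x::'x, a::'a, r::'r, s::'s, y::real). marg_r2 MX MA MR1 px pis q1 q2 qy s / marg_r2 MX MA MR1 px pib q1 q2 qy s"
  let ?W3 = "\<lambda>(x::'x, a::'a, r::'r, s::'s, y::real). marg_y MX MA MR1 MR2 px pis q1 q2 qy y / marg_y MX MA MR1 MR2 px pib q1 q2 qy y"
  let ?Q = "\<lambda>W. (\<integral>\<^sup>+ \<omega>. ennreal ((W \<omega> * yof \<omega>)\<^sup>2) \<partial>?Pb)"
  let ?f2 = "\<lambda>y::real. ennreal (y\<^sup>2)"
  have spO: "\<omega> \<in> space Om \<Longrightarrow> fst (snd (snd \<omega>)) \<in> space MR1 \<and> fst (snd (snd (snd \<omega>))) \<in> space MR2" for \<omega>
    by (auto simp: space_pair_measure)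
  have WI: "(\<lambda>\<omega>. ?WI \<omega> * yof \<omega>) \<in> borel_measurable ?Pb \<and>
      (\<integral>\<^sup>+ \<omega>. ennreal (?WI \<omega> * yof \<omega>) \<partial>?Pb) = (\<integral>\<^sup>+ \<omega>. ennreal (yof \<omega>) \<partial>jmeas MX MA MR1 MR2 px pis q1 q2 qy) \<and>
      (\<integral>\<^sup>+ \<omega>. ennreal (- (?WI \<omega> * yof \<omega>)) \<partial>?Pb) = (\<integral>\<^sup>+ \<omega>. ennreal (- yof \<omega>) \<partial>jmeas MX MA MR1 MR2 px pis q1 q2 qy) \<and>
      ?Q ?WI = EE pib (\<lambda>xa. (ennreal (pis (fst xa) (snd xa) / pib (fst xa) (snd xa)))\<^sup>2) (\<lambda>r. (1::ennreal)\<^sup>2) (\<lambda>s. (1::ennreal)\<^sup>2) (\<lambda>y. (1::ennreal)\<^sup>2 * ennreal (y\<^sup>2))"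
  proof (intro conjI weight_facts[where c="\<lambda>xa. ennreal (pis (fst xa) (snd xa) / pib (fst xa) (snd xa))" and d="\<lambda>_. 1" and e="\<lambda>_. 1" and h="\<lambda>_. 1"])
    show "?WI \<in> borel_measurable Om" by measurable
  qed (auto simp: pis_nn pib_nn mean_IPW)
  have W1m: "?W1 \<in> borel_measurable Om"
  proof -
    have "?W1 \<in> borel_measurable Om \<longleftrightarrow> (\<lambda>\<omega>::'x \<times> 'a \<times> 'r \<times> 's \<times> real. L1.w' (fst (snd (snd \<omega>)))) \<in> borel_measurable Om"
      by (rule Sigma_Algebra.measurable_cong) (auto simp: space_pair_measure wG1_eq split: prod.splits)
    then show ?thesis by (simp only:) measurable
  qed
  have W1: "(\<lambda>\<omega>. ?W1 \<omega> * yof \<omega>) \<in> borel_measurable ?Pb \<and>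
      (\<integral>\<^sup>+ \<omega>. ennreal (?W1 \<omega> * yof \<omega>) \<partial>?Pb) = (\<integral>\<^sup>+ \<omega>. ennreal (yof \<omega>) \<partial>jmeas MX MA MR1 MR2 px pis q1 q2 qy) \<and>
      (\<integral>\<^sup>+ \<omega>. ennreal (- (?W1 \<omega> * yof \<omega>)) \<partial>?Pb) = (\<integral>\<^sup>+ \<omega>. ennreal (- yof \<omega>) \<partial>jmeas MX MA MR1 MR2 px pis q1 q2 qy) \<and>
      ?Q ?W1 = EE pib (\<lambda>xa. (1::ennreal)\<^sup>2) (\<lambda>r. (ennreal (L1.w' r))\<^sup>2) (\<lambda>s. (1::ennreal)\<^sup>2) (\<lambda>y. (1::ennreal)\<^sup>2 * ennreal (y\<^sup>2))"
  proof (intro conjI weight_facts[where c="\<lambda>_. 1" and d="\<lambda>r. ennreal (L1.w' r)" and e="\<lambda>_. 1" and h="\<lambda>_. 1", OF W1m])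
  qed (auto simp: space_pair_measure wG1_eq L1.w'_nn mean_G1 split: prod.splits)
  have W2m: "?W2 \<in> borel_measurable Om"
  proof -
    have "?W2 \<in> borel_measurable Om \<longleftrightarrow> (\<lambda>\<omega>::'x \<times> 'a \<times> 'r \<times> 's \<times> real. L2.w' (fst (snd (snd (snd \<omega>))))) \<in> borel_measurable Om"
      by (rule Sigma_Algebra.measurable_cong) (auto simp: space_pair_measure wG2_eq split: prod.splits)
    then show ?thesis by (simp only:) measurable
  qed
  have W2: "(\<lambda>\<omega>. ?W2 \<omega> * yof \<omega>) \<in> borel_measurable ?Pb \<and>
      (\<integral>\<^sup>+ \<omega>. ennreal (?W2 \<omega> * yof \<omega>) \<partial>?Pb) = (\<integral>\<^sup>+ \<omega>. ennreal (yof \<omega>) \<partial>jmeas MX MA MR1 MR2 px pis q1 q2 qy) \<and>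
      (\<integral>\<^sup>+ \<omega>. ennreal (- (?W2 \<omega> * yof \<omega>)) \<partial>?Pb) = (\<integral>\<^sup>+ \<omega>. ennreal (- yof \<omega>) \<partial>jmeas MX MA MR1 MR2 px pis q1 q2 qy) \<and>
      ?Q ?W2 = EE pib (\<lambda>xa. (1::ennreal)\<^sup>2) (\<lambda>r. (1::ennreal)\<^sup>2) (\<lambda>s. (ennreal (L2.w' s))\<^sup>2) (\<lambda>y. (1::ennreal)\<^sup>2 * ennreal (y\<^sup>2))"
  proof (intro conjI weight_facts[where c="\<lambda>_. 1" and d="\<lambda>_. 1" and e="\<lambda>s. ennreal (L2.w' s)" and h="\<lambda>_. 1", OF W2m])
  qed (auto simp: space_pair_measure wG2_eq L2.w'_nn mean_G2 split: prod.splits)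
  have W3m: "?W3 \<in> borel_measurable Om"
  proof -
    have "?W3 \<in> borel_measurable Om \<longleftrightarrow> (\<lambda>\<omega>. L3.w' (snd (snd (snd (snd \<omega>))))) \<in> borel_measurable Om"
      by (rule Sigma_Algebra.measurable_cong) (auto simp: wMR_eq split: prod.splits)
    then show ?thesis by (simp only:) measurable
  qed
  have W3: "(\<lambda>\<omega>. ?W3 \<omega> * yof \<omega>) \<in> borel_measurable ?Pb \<and>
      (\<integral>\<^sup>+ \<omega>. ennreal (?W3 \<omega> * yof \<omega>) \<partial>?Pb) = (\<integral>\<^sup>+ \<omega>. ennreal (yof \<omega>) \<partial>jmeas MX MA MR1 MR2 px pis q1 q2 qy) \<and>
      (\<integral>\<^sup>+ \<omega>. ennreal (- (?W3 \<omega> * yof \<omega>)) \<partial>?Pb) = (\<integral>\<^sup>+ \<omega>. ennreal (- yof \<omega>) \<partial>jmeas MX MA MR1 MR2 px pis q1 q2 qy) \<and>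
      ?Q ?W3 = EE pib (\<lambda>xa. (1::ennreal)\<^sup>2) (\<lambda>r. (1::ennreal)\<^sup>2) (\<lambda>s. (1::ennreal)\<^sup>2) (\<lambda>y. (ennreal (L3.w' y))\<^sup>2 * ennreal (y\<^sup>2))"
  proof (intro conjI weight_facts[where c="\<lambda>_. 1" and d="\<lambda>_. 1" and e="\<lambda>_. 1" and h="\<lambda>y. ennreal (L3.w' y)", OF W3m])
  qed (auto simp: wMR_eq L3.w'_nn mean_MR split: prod.splits)
  have f2m: "?f2 \<in> borel_measurable borel" by measurable
  have one2: "(\<lambda>_::'z. (1::ennreal)\<^sup>2) = (\<lambda>_. 1)" for dummy :: 'z by simp
  have onef: "(\<lambda>y::real. (1::ennreal)\<^sup>2 * ennreal (y\<^sup>2)) = ?f2" by simp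
  have cI: "(\<lambda>xa. (ennreal (pis (fst xa) (snd xa) / pib (fst xa) (snd xa)))\<^sup>2) = (\<lambda>xa. ennreal ((pis (fst xa) (snd xa) / pib (fst xa) (snd xa))\<^sup>2))"
    by (rule ext) (rule ennreal_power, simp add: pis_nn pib_nn)
  have c1: "(\<lambda>r. (ennreal (L1.w' r))\<^sup>2) = (\<lambda>r. ennreal ((L1.w' r)\<^sup>2))"
    by (rule ext) (rule ennreal_power, rule L1.w'_nn)
  have c2: "(\<lambda>s. (ennreal (L2.w' s))\<^sup>2) = (\<lambda>s. ennreal ((L2.w' s)\<^sup>2))"
    by (rule ext) (rule ennreal_power, rule L2.w'_nn)
  have c3: "(\<lambda>y. (ennreal (L3.w' y))\<^sup>2 * ennreal (y\<^sup>2)) = (\<lambda>y. ennreal ((L3.w' y)\<^sup>2) * ?f2 y)"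
    by (rule ext) (subst ennreal_power, rule L3.w'_nn, rule refl)
  have QI: "?Q ?WI = EE pib (\<lambda>xa. ennreal ((pis (fst xa) (snd xa) / pib (fst xa) (snd xa))\<^sup>2)) (\<lambda>_. 1) (\<lambda>_. 1) ?f2"
    using WI[THEN conjunct2, THEN conjunct2, THEN conjunct2] unfolding cI one2 onef .
  have Q1: "?Q ?W1 = EE pib (\<lambda>_. 1) (\<lambda>r. ennreal ((L1.w' r)\<^sup>2)) (\<lambda>_. 1) ?f2"
    using W1[THEN conjunct2, THEN conjunct2, THEN conjunct2] unfolding c1 one2 onef .
  have Q2: "?Q ?W2 = EE pib (\<lambda>_. 1) (\<lambda>_. 1) (\<lambda>s. ennreal ((L2.w' s)\<^sup>2)) ?f2"
    using W2[THEN conjunct2, THEN conjunct2, THEN conjunct2] unfolding c2 one2 onef .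
  have Q3: "?Q ?W3 = EE pib (\<lambda>_. 1) (\<lambda>_. 1) (\<lambda>_. 1) (\<lambda>y. ennreal ((L3.w' y)\<^sup>2) * ?f2 y)"
    using W3[THEN conjunct2, THEN conjunct2, THEN conjunct2] unfolding c3 one2 .
  have le32: "?Q ?W3 \<le> ?Q ?W2" unfolding Q3 Q2 by (rule sec_MR_G2[OF f2m])
  have le21: "?Q ?W2 \<le> ?Q ?W1" unfolding Q2 Q1 by (rule sec_G2_G1[OF f2m])
  have le1I: "?Q ?W1 \<le> ?Q ?WI" unfolding Q1 QI by (rule sec_G1_IPW[OF f2m])
  have QIfin: "?Q ?WI \<noteq> \<infinity>"
  proof -
    have "?Q ?WI = (\<integral>\<^sup>+ \<omega>. ennreal ((\<lambda>(x, a, r, s, y). (pis x a / pib x a * y)\<^sup>2) \<omega>) \<partial>?Pb)"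
      by (intro nn_integral_cong) (auto simp: yof_def split: prod.splits)
    then show ?thesis using integrableD(2)[OF sq_int] by simp
  qed
  have Q1fin: "?Q ?W1 \<noteq> \<infinity>" using le1I QIfin by (auto simp: top_unique)
  have Q2fin: "?Q ?W2 \<noteq> \<infinity>" using le21 Q1fin by (auto simp: top_unique)
  have Q3fin: "?Q ?W3 \<noteq> \<infinity>" using le32 Q2fin by (auto simp: top_unique)
  note CI = combine[OF WI[THEN conjunct1] WI[THEN conjunct2, THEN conjunct1] WI[THEN conjunct2, THEN conjunct2, THEN conjunct1] QIfin n_pos]
  note C1 = combine[OF W1[THEN conjunct1] W1[THEN conjunct2, THEN conjunct1] W1[THEN conjunct2, THEN conjunct2, THEN conjunct1] Q1fin n_pos]
  note C2 = combine[OF W2[THEN conjunct1] W2[THEN conjunct2, THEN conjunct1] W2[THEN conjunct2, THEN conjunct2, THEN conjunct1] Q2fin n_pos]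
  note C3 = combine[OF W3[THEN conjunct1] W3[THEN conjunct2, THEN conjunct1] W3[THEN conjunct2, THEN conjunct2, THEN conjunct1] Q3fin n_pos]
  have e1I: "enn2real (?Q ?W1) \<le> enn2real (?Q ?WI)" using le1I QIfin by (intro enn2real_mono) (auto simp: less_top infinity_ennreal_def)
  have e21: "enn2real (?Q ?W2) \<le> enn2real (?Q ?W1)" using le21 Q1fin by (intro enn2real_mono) (auto simp: less_top infinity_ennreal_def)
  have e32: "enn2real (?Q ?W3) \<le> enn2real (?Q ?W2)" using le32 Q2fin by (intro enn2real_mono) (auto simp: less_top infinity_ennreal_def)
  have npos: "real n > 0" using n_pos by simp
  show ?thesis unfolding Let_def
    using CI C1 C2 C3 e1I e21 e32 npos by (simp add: divide_right_mono)
qed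

end

theorem propositionA4:
  fixes MX :: "'x measure" and MA :: "'a measure" and MR1 :: "'r measure" and MR2 :: "'s measure"
    and px :: "'x \<Rightarrow> real" and pib pis :: "'x \<Rightarrow> 'a \<Rightarrow> real"
    and q1 :: "'x \<Rightarrow> 'a \<Rightarrow> 'r \<Rightarrow> real" and q2 :: "'r \<Rightarrow> 's \<Rightarrow> real"
    and qy :: "'s \<Rightarrow> real \<Rightarrow> real" and n :: nat
  assumes sfX: "sigma_finite_measure MX" and sfA: "sigma_finite_measure MA"
    and sfR: "sigma_finite_measure MR1" and sfS: "sigma_finite_measure MR2"
    and px_meas: "px \<in> borel_measurable MX"
    and pib_meas: "(\<lambda>(x, a). pib x a) \<in> borel_measurable (MX \<Otimes>\<^sub>M MA)"
    and pis_meas: "(\<lambda>(x, a). pis x a) \<in> borel_measurable (MX \<Otimes>\<^sub>M MA)"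
    and q1_meas: "(\<lambda>(x, a, r). q1 x a r) \<in> borel_measurable (MX \<Otimes>\<^sub>M MA \<Otimes>\<^sub>M MR1)"
    and q2_meas: "(\<lambda>(r, s). q2 r s) \<in> borel_measurable (MR1 \<Otimes>\<^sub>M MR2)"
    and qy_meas: "(\<lambda>(s, y). qy s y) \<in> borel_measurable (MR2 \<Otimes>\<^sub>M lborel)"
    and px_nn: "\<And>x. px x \<ge> 0"
    and pib_nn: "\<And>x a. pib x a \<ge> 0" and pis_nn: "\<And>x a. pis x a \<ge> 0"
    and q1_nn: "\<And>x a r. q1 x a r \<ge> 0" and q2_nn: "\<And>r s. q2 r s \<ge> 0"
    and qy_nn: "\<And>s y. qy s y \<ge> 0"
    and px_norm: "(\<integral>\<^sup>+ x. ennreal (px x) \<partial>MX) = 1"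
    and pib_norm: "\<And>x. x \<in> space MX \<Longrightarrow> (\<integral>\<^sup>+ a. ennreal (pib x a) \<partial>MA) = 1"
    and pis_norm: "\<And>x. x \<in> space MX \<Longrightarrow> (\<integral>\<^sup>+ a. ennreal (pis x a) \<partial>MA) = 1"
    and q1_norm: "\<And>x a. x \<in> space MX \<Longrightarrow> a \<in> space MA \<Longrightarrow> (\<integral>\<^sup>+ r. ennreal (q1 x a r) \<partial>MR1) = 1"
    and q2_norm: "\<And>r. r \<in> space MR1 \<Longrightarrow> (\<integral>\<^sup>+ s. ennreal (q2 r s) \<partial>MR2) = 1"
    and qy_norm: "\<And>s. s \<in> space MR2 \<Longrightarrow> (\<integral>\<^sup>+ y. ennreal (qy s y) \<partial>lborel) = 1"
    and abs_cont: "\<And>x a. pis x a > 0 \<Longrightarrow> pib x a > 0"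
    and sq_int: "integrable (jmeas MX MA MR1 MR2 px pib q1 q2 qy)
                   (\<lambda>(x, a, r, s, y). (pis x a / pib x a * y)\<^sup>2)"
    and n_pos: "n \<ge> 1"
  shows
   "let Pb = jmeas MX MA MR1 MR2 px pib q1 q2 qy;
        Ps = jmeas MX MA MR1 MR2 px pis q1 q2 qy;
        S = PiM {..<n} (\<lambda>_. Pb);
        wIPW = (\<lambda>(x, a, r, s, y). pis x a / pib x a);
        wG1 = (\<lambda>(x, a, r, s, y). marg_r1 MX MA MR2 px pis q1 q2 qy r / marg_r1 MX MA MR2 px pib q1 q2 qy r);
        wG2 = (\<lambda>(x, a, r, s, y). marg_r2 MX MA MR1 px pis q1 q2 qy s / marg_r2 MX MA MR1 px pib q1 q2 qy s);
        wMR = (\<lambda>(x, a, r, s, y). marg_y MX MA MR1 MR2 px pis q1 q2 qy y / marg_y MX MA MR1 MR2 px pib q1 q2 qy y);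
        vS = (\<integral>z. yof z \<partial>Ps)
    in (\<integral>\<omega>. west n wIPW \<omega> \<partial>S) = vS \<and> (\<integral>\<omega>. west n wG1 \<omega> \<partial>S) = vS \<and>
       (\<integral>\<omega>. west n wG2 \<omega> \<partial>S) = vS \<and> (\<integral>\<omega>. west n wMR \<omega> \<partial>S) = vS \<and>
       var S (west n wIPW) \<ge> var S (west n wG1) \<and>
       var S (west n wG1) \<ge> var S (west n wG2) \<and>
       var S (west n wG2) \<ge> var S (west n wMR)"
proof -
  interpret setting MX MA MR1 MR2 px pib pis q1 q2 qy
    by (rule setting.intro) fact+
  show ?thesis by (rule final[OF sq_int n_pos])
qed

end
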